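(* Let $M$ be a smooth convex hypersurface in $\mathbb{E}^{n+1}$ and $p\in M$. Choose coordinates $(x,z)=(x_1,\dots,x_n,z)$ of $\mathbb{E}^{n+1}$ with origin $p$ such that the tangent hyperplane of $M$ at $p$ is $z=0$ and $M$ is locally the graph $z=f(x)$ of a nonnegative smooth convex function $f$ defined near $0$ with $f(0)=0$. For sufficiently small $t>0$ define $A_p(t)=\int_{f(x)<t}1\,dx$, $V_p(t)=\int_{f(x)<t}\{t-f(x)\}\,dx$, $S_p(t)=\int_{f(x)<t}\sqrt{1+|\nabla f|^2}\,dx$ (integration over the region around $0$ where $f<t$; these are the area of the section cut off by the hyperplane $z=t$, the volume of the cap between $M$ and $z=t$, and the surface area of the part of $M$ between $z=0$ and $z=t$). Suppose the Gauss–Kronecker curvature $K(p)$ of $M$ at $p$ with respect to the upward unit normal is positive. Then 1) $\lim_{t\to 0}\frac{A_p(t)}{(\sqrt t)^n}=\frac{(\sqrt2)^n\omega_n}{\sqrt{K(p)}}$; 2) $\lim_{t\to 0}\frac{V_p(t)}{(\sqrt t)^{n+2}}=\frac{(\sqrt2)^{n+2}\omega_n}{(n+2)\sqrt{K(p)}}$; 3) $\lim_{t\to 0}\frac{S_p(t)}{(\sqrt t)^n}=\frac{(\sqrt2)^n\omega_n}{\sqrt{K(p)}}$, where $\omega_n$ denotes the volume of the $n$-dimensional unit ball.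
   Context: $dx=dx_1\cdots dx_n$ and $\nabla f$ is the gradient of $f$. In these coordinates $K(p)=\det D^2f(0)$. *)

theory Defs
  imports "HOL-Analysis.Analysis"
begin

text \<open>Iterated partial derivatives of a real-valued function on real^'n.
  dpart [i1,...,ik] g is the partial derivative w.r.t. x_i1 of ... of
  the partial derivative w.r.t. x_ik of g.\<close>
fun dpart :: "'n::finite list \<Rightarrow> (real^'n \<Rightarrow> real) \<Rightarrow> real^'n \<Rightarrow> real" where
  "dpart [] g = g"
| "dpart (i # is) g = (\<lambda>x. deriv (\<lambda>s. dpart is g (x + s *\<^sub>R axis i 1)) 0)"

text \<open>Smoothness (C-infinity) on an open set U: all iterated partial
  derivatives exist on U and are continuous on U.\<close>
definition smooth_on :: "(real^'n::finite) set \<Rightarrow> (real^'n \<Rightarrow> real) \<Rightarrow> bool" where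
  "smooth_on U g \<longleftrightarrow>
     (\<forall>is. continuous_on U (dpart is g) \<and>
        (\<forall>x\<in>U. \<forall>i. ((\<lambda>s. dpart is g (x + s *\<^sub>R axis i 1))
              has_real_derivative dpart (i # is) g x) (at 0)))"

text \<open>Gradient and Hessian matrix.\<close>
definition grad :: "(real^'n::finite \<Rightarrow> real) \<Rightarrow> real^'n \<Rightarrow> real^'n" where
  "grad g x = (\<chi> i. dpart [i] g x)"

definition hessian :: "(real^'n::finite \<Rightarrow> real) \<Rightarrow> real^'n \<Rightarrow> real^'n^'n" where
  "hessian g x = (\<chi> i j. dpart [i, j] g x)"

text \<open>Volume of the n-dimensional unit ball.\<close>
definition unit_ball_volume :: "'n::finite itself \<Rightarrow> real" where
  "unit_ball_volume _ = measure lebesgue (ball (0 :: real^'n) 1)"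

end

theory Submission
  imports Defs
begin

definition hasPD :: "(real^'n::finite) set \<Rightarrow> (real^'n \<Rightarrow> real) \<Rightarrow> ('n \<Rightarrow> real^'n \<Rightarrow> real) \<Rightarrow> bool" where
  "hasPD U g D \<longleftrightarrow> (\<forall>x\<in>U. \<forall>i. ((\<lambda>s. g (x + s *\<^sub>R axis i 1)) has_real_derivative D i x) (at 0))"

lemma pd_shift:
  assumes "hasPD U g D" "x + s0 *\<^sub>R axis i 1 \<in> U"
  shows "((\<lambda>s. g (x + s *\<^sub>R axis i 1)) has_real_derivative D i (x + s0 *\<^sub>R axis i 1)) (at s0)"
proof -
  let ?y = "x + s0 *\<^sub>R axis i 1"
  have 1: "((\<lambda>s. g (?y + s *\<^sub>R axis i 1)) has_real_derivative D i ?y) (at 0)"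
    using assms unfolding hasPD_def by blast
  have "(\<lambda>u. g (x + (u + s0) *\<^sub>R axis i 1)) = (\<lambda>s. g (?y + s *\<^sub>R axis i 1))"
    by (rule ext) (simp add: algebra_simps)
  with 1 have "((\<lambda>u. g (x + (u + s0) *\<^sub>R axis i 1)) has_real_derivative D i ?y) (at 0)" by simp
  then show ?thesis using DERIV_shift[of "\<lambda>s. g (x + s *\<^sub>R axis i 1)" "D i ?y" 0 s0] by simp
qed

lemma pd_mvt:
  assumes "hasPD U g D" "\<And>s. \<bar>s\<bar> \<le> \<bar>h\<bar> \<Longrightarrow> p + s *\<^sub>R axis k 1 \<in> U"
  shows "\<exists>\<xi>. \<bar>\<xi>\<bar> \<le> \<bar>h\<bar> \<and> g (p + h *\<^sub>R axis k 1) - g p = h * D k (p + \<xi> *\<^sub>R axis k 1)"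
proof (cases "h = 0")
  case True then show ?thesis by (intro exI[of _ 0]) simp
next
  case False
  have der: "\<And>s. \<bar>s\<bar> \<le> \<bar>h\<bar> \<Longrightarrow> ((\<lambda>s. g (p + s *\<^sub>R axis k 1)) has_real_derivative D k (p + s *\<^sub>R axis k 1)) (at s)"
    using pd_shift[OF assms(1) assms(2)] by blast
  show ?thesis
  proof (cases "h > 0")
    case True
    have "\<exists>z>0. z < h \<and> g (p + h *\<^sub>R axis k 1) - g (p + 0 *\<^sub>R axis k 1) = (h - 0) * D k (p + z *\<^sub>R axis k 1)"
      by (rule MVT2[OF True]) (rule der, use True in auto)
    then show ?thesis using True by (metis abs_of_pos add.right_neutral diff_zero less_imp_le scale_zero_left)
  next
    case f2: False
    with False have hn: "h < 0" by simp
    have "\<exists>z>h. z < 0 \<and> g (p + 0 *\<^sub>R axis k 1) - g (p + h *\<^sub>R axis k 1) = (0 - h) * D k (p + z *\<^sub>R axis k 1)"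
      by (rule MVT2[OF hn]) (rule der, use hn in auto)
    then obtain z where "z > h" "z < 0" "g p - g (p + h *\<^sub>R axis k 1) = (0 - h) * D k (p + z *\<^sub>R axis k 1)" by auto
    then show ?thesis using hn by (intro exI[of _ z]) (auto simp: algebra_simps)
  qed
qed

definition pS :: "'n::finite set \<Rightarrow> real^'n \<Rightarrow> real^'n" where
  "pS S h = (\<chi> i. if i \<in> S then h$i else 0)"

lemma pS_empty[simp]: "pS {} h = 0" by (simp add: pS_def vec_eq_iff)
lemma pS_UNIV[simp]: "pS UNIV h = h" by (simp add: pS_def vec_eq_iff)
lemma pS_insert: "k \<notin> S \<Longrightarrow> pS (insert k S) h = pS S h + h$k *\<^sub>R axis k 1"
  by (auto simp: pS_def vec_eq_iff axis_def)
lemma norm_pS_axis: "k \<notin> S \<Longrightarrow> \<bar>s\<bar> \<le> \<bar>h$k\<bar> \<Longrightarrow> norm (pS S h + s *\<^sub>R axis k 1) \<le> norm h"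
  by (rule norm_le_componentwise_cart) (auto simp: pS_def axis_def)
lemma norm_pS: "norm (pS S h) \<le> norm h"
  by (rule norm_le_componentwise_cart) (auto simp: pS_def)

lemma min_choice:
  fixes P :: "'a::finite \<Rightarrow> real^'n::finite \<Rightarrow> bool"
  assumes "\<And>i. \<exists>d>0. \<forall>y. norm y < d \<longrightarrow> P i y"
  shows "\<exists>d>0. \<forall>i y. norm y < d \<longrightarrow> P i y"
proof -
  from assms obtain s where s: "\<And>i. s i > 0" "\<And>i y. norm y < s i \<Longrightarrow> P i y" by metis
  define d where "d = Min (range s)"
  have "d > 0" unfolding d_def using s(1) by (subst Min_gr_iff) auto
  moreover have "\<And>i. d \<le> s i" unfolding d_def by (rule Min_le) auto
  ultimately show ?thesis using s(2) by (metis order_less_le_trans)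
qed

lemma cont_choice:
  fixes D :: "'a::finite \<Rightarrow> real^'n::finite \<Rightarrow> real"
  assumes "\<And>i. isCont (D i) 0" "e > 0"
  shows "\<exists>d>0. \<forall>i y. norm y < d \<longrightarrow> \<bar>D i y - D i 0\<bar> < e"
proof (rule min_choice)
  fix i
  from assms(1)[of i] have "D i \<midarrow>0\<rightarrow> D i 0" by (simp add: isCont_def)
  then obtain s where "s > 0" "\<And>y. y \<noteq> 0 \<and> norm (y - 0) < s \<Longrightarrow> norm (D i y - D i 0) < e"
    using assms(2) unfolding LIM_eq by blast
  then show "\<exists>s>0. \<forall>y. norm y < s \<longrightarrow> \<bar>D i y - D i 0\<bar> < e"
    using assms(2) by (metis diff_self abs_zero real_norm_def diff_zero)
qed

lemma first_order:
  fixes g :: "real^'n::finite \<Rightarrow> real"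
  assumes "open U" "0 \<in> U" "hasPD U g D" "\<And>i. isCont (D i) 0" "\<epsilon> > 0"
  shows "\<exists>\<delta>>0. \<forall>h. norm h < \<delta> \<longrightarrow> \<bar>g h - g 0 - (\<Sum>i\<in>UNIV. h$i * D i 0)\<bar> \<le> \<epsilon> * norm h"
proof -
  obtain d1 where d1: "d1 > 0" "ball 0 d1 \<subseteq> U" using assms(1,2) open_contains_ball by blast
  define e where "e = \<epsilon> / CARD('n)"
  have e: "e > 0" using assms(5) by (simp add: e_def)
  obtain d2 where d2: "d2 > 0" "\<And>i y. norm y < d2 \<Longrightarrow> \<bar>D i y - D i 0\<bar> < e"
    using cont_choice[of D, OF assms(4) e] by blast
  define d where "d = min d1 d2"
  have claim: "finite S \<Longrightarrow> \<forall>h. norm h < d \<longrightarrow> \<bar>g (pS S h) - g 0 - (\<Sum>i\<in>S. h$i * D i 0)\<bar> \<le> real (card S) * e * norm h" for S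
  proof (induction S rule: finite_induct)
    case empty then show ?case by simp
  next
    case (insert k S)
    show ?case
    proof (intro allI impI)
      fix h :: "real^'n" assume h: "norm h < d"
      have inU: "pS S h + s *\<^sub>R axis k 1 \<in> U" if "\<bar>s\<bar> \<le> \<bar>h$k\<bar>" for s
        using norm_pS_axis[OF insert(2) that] h d1(2) by (auto simp: d_def)
      obtain \<xi> where xi: "\<bar>\<xi>\<bar> \<le> \<bar>h$k\<bar>"
        "g (pS S h + h$k *\<^sub>R axis k 1) - g (pS S h) = h$k * D k (pS S h + \<xi> *\<^sub>R axis k 1)"
        using pd_mvt[OF assms(3), of "h$k" "pS S h" k] inU by blast
      have "norm (pS S h + \<xi> *\<^sub>R axis k 1) < d2"
        using norm_pS_axis[OF insert(2) xi(1)] h by (auto simp: d_def)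
      then have b1: "\<bar>D k (pS S h + \<xi> *\<^sub>R axis k 1) - D k 0\<bar> \<le> e" using d2(2) by (meson less_imp_le)
      have b2: "\<bar>h$k\<bar> \<le> norm h" by (rule component_le_norm_cart)
      have IH: "\<bar>g (pS S h) - g 0 - (\<Sum>i\<in>S. h$i * D i 0)\<bar> \<le> real (card S) * e * norm h"
        using insert(3) h by blast
      have eq: "g (pS (insert k S) h) - g 0 - (\<Sum>i\<in>insert k S. h$i * D i 0)
          = (g (pS S h) - g 0 - (\<Sum>i\<in>S. h$i * D i 0)) + h$k * (D k (pS S h + \<xi> *\<^sub>R axis k 1) - D k 0)"
        using xi(2) insert(1,2) by (simp add: pS_insert algebra_simps)
      have "\<bar>h$k * (D k (pS S h + \<xi> *\<^sub>R axis k 1) - D k 0)\<bar> \<le> norm h * e"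
        unfolding abs_mult by (rule mult_mono[OF b2 b1]) auto
      then show "\<bar>g (pS (insert k S) h) - g 0 - (\<Sum>i\<in>insert k S. h$i * D i 0)\<bar> \<le> real (card (insert k S)) * e * norm h"
        unfolding eq using IH insert(1,2) by (simp add: algebra_simps)
    qed
  qed
  have "d > 0" using d1 d2 by (simp add: d_def)
  moreover have "real CARD('n) * e = \<epsilon>" by (simp add: e_def)
  ultimately show ?thesis using claim[of UNIV, OF finite_class.finite_UNIV] by (intro exI[of _ d]) auto
qed

lemma mvt_abs:
  fixes \<phi> :: "real \<Rightarrow> real"
  assumes "\<And>s. \<bar>s\<bar> \<le> \<bar>h\<bar> \<Longrightarrow> (\<phi> has_real_derivative \<phi>' s) (at s)"
  shows "\<exists>\<xi>. \<bar>\<xi>\<bar> \<le> \<bar>h\<bar> \<and> \<phi> h - \<phi> 0 = h * \<phi>' \<xi>"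
proof (cases "h = 0")
  case True then show ?thesis by (intro exI[of _ 0]) simp
next
  case False
  show ?thesis
  proof (cases "h > 0")
    case True
    have "\<exists>z>0. z < h \<and> \<phi> h - \<phi> 0 = (h - 0) * \<phi>' z"
      by (rule MVT2[OF True]) (rule assms, use True in auto)
    then show ?thesis using True by (metis abs_of_pos diff_zero less_imp_le)
  next
    case f2: False
    with False have hn: "h < 0" by simp
    have "\<exists>z>h. z < 0 \<and> \<phi> 0 - \<phi> h = (0 - h) * \<phi>' z"
      by (rule MVT2[OF hn]) (rule assms, use hn in auto)
    then obtain z where "z > h" "z < 0" "\<phi> 0 - \<phi> h = (0 - h) * \<phi>' z" by auto
    then show ?thesis using hn by (intro exI[of _ z]) (auto simp: algebra_simps)
  qed
qed

lemma norm_two_axis: "norm (u *\<^sub>R axis i (1::real) + v *\<^sub>R axis j 1) \<le> \<bar>u\<bar> + \<bar>v\<bar>"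
  by (rule order_trans[OF norm_triangle_ineq]) (simp add: norm_axis_1)

lemma double_diff:
  fixes f :: "real^'n::finite \<Rightarrow> real"
  assumes PD1: "hasPD U f D1" and PD2: "\<And>i. hasPD U (D1 i) (\<lambda>j. D2 j i)"
    and inU: "\<And>u v. \<bar>u\<bar> \<le> \<bar>s\<bar> \<Longrightarrow> \<bar>v\<bar> \<le> \<bar>s\<bar> \<Longrightarrow> u *\<^sub>R axis i 1 + v *\<^sub>R axis j 1 \<in> U"
  shows "\<exists>\<xi> \<eta>. \<bar>\<xi>\<bar> \<le> \<bar>s\<bar> \<and> \<bar>\<eta>\<bar> \<le> \<bar>s\<bar> \<and>
     f (s *\<^sub>R axis i 1 + s *\<^sub>R axis j 1) - f (s *\<^sub>R axis i 1) - f (s *\<^sub>R axis j 1) + f 0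
       = s * s * D2 j i (\<xi> *\<^sub>R axis i 1 + \<eta> *\<^sub>R axis j 1)"
proof -
  define \<phi> where "\<phi> u = f (s *\<^sub>R axis j 1 + u *\<^sub>R axis i 1) - f (0 + u *\<^sub>R axis i 1)" for u
  have inU1: "s *\<^sub>R axis j 1 + u *\<^sub>R axis i 1 \<in> U" if "\<bar>u\<bar> \<le> \<bar>s\<bar>" for u
    using inU[OF that, of s] by (simp add: add.commute)
  have inU2: "0 + u *\<^sub>R axis i 1 \<in> U" if "\<bar>u\<bar> \<le> \<bar>s\<bar>" for u
    using inU[OF that, of 0] by simp
  have "\<exists>\<xi>. \<bar>\<xi>\<bar> \<le> \<bar>s\<bar> \<and> \<phi> s - \<phi> 0 = s * (D1 i (s *\<^sub>R axis j 1 + \<xi> *\<^sub>R axis i 1) - D1 i (0 + \<xi> *\<^sub>R axis i 1))"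
    unfolding \<phi>_def
    by (rule mvt_abs, rule DERIV_diff, (rule pd_shift[OF PD1], rule inU1, assumption),
        (rule pd_shift[OF PD1], rule inU2, assumption))
  then obtain \<xi> where xi: "\<bar>\<xi>\<bar> \<le> \<bar>s\<bar>"
    "\<phi> s - \<phi> 0 = s * (D1 i (\<xi> *\<^sub>R axis i 1 + s *\<^sub>R axis j 1) - D1 i (\<xi> *\<^sub>R axis i 1))"
    by (auto simp: add.commute)
  have "\<exists>\<eta>. \<bar>\<eta>\<bar> \<le> \<bar>s\<bar> \<and> D1 i (\<xi> *\<^sub>R axis i 1 + s *\<^sub>R axis j 1) - D1 i (\<xi> *\<^sub>R axis i 1)
        = s * D2 j i (\<xi> *\<^sub>R axis i 1 + \<eta> *\<^sub>R axis j 1)"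
    by (rule pd_mvt[OF PD2]) (rule inU[OF xi(1)])
  then obtain \<eta> where eta: "\<bar>\<eta>\<bar> \<le> \<bar>s\<bar>" "D1 i (\<xi> *\<^sub>R axis i 1 + s *\<^sub>R axis j 1) - D1 i (\<xi> *\<^sub>R axis i 1)
        = s * D2 j i (\<xi> *\<^sub>R axis i 1 + \<eta> *\<^sub>R axis j 1)" by blast
  have "\<phi> s - \<phi> 0 = f (s *\<^sub>R axis i 1 + s *\<^sub>R axis j 1) - f (s *\<^sub>R axis i 1) - f (s *\<^sub>R axis j 1) + f 0"
    by (simp add: \<phi>_def add.commute)
  then show ?thesis using xi eta by (intro exI[of _ \<xi>] exI[of _ \<eta>]) simp
qed

lemma clairaut:
  fixes f :: "real^'n::finite \<Rightarrow> real"
  assumes "open U" "0 \<in> U" and PD1: "hasPD U f D1" and PD2: "\<And>i. hasPD U (D1 i) (\<lambda>j. D2 j i)"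
    and cont: "\<And>i j. isCont (D2 i j) 0"
  shows "D2 i j 0 = D2 j i 0"
proof -
  have that_e: "\<bar>D2 j i 0 - D2 i j 0\<bar> \<le> 2 * e" if e: "e > 0" for e
  proof -
    obtain d1 where d1: "d1 > 0" "ball 0 d1 \<subseteq> U" using assms(1,2) open_contains_ball by blast
    obtain d2 where d2: "d2 > 0" "\<And>p y. norm y < d2 \<Longrightarrow> \<bar>D2 (fst p) (snd p) y - D2 (fst p) (snd p) 0\<bar> < e"
      using cont_choice[of "\<lambda>p. D2 (fst p) (snd p)", OF cont e] by blast
    define s where "s = min d1 d2 / 4"
    have s: "s > 0" "2 * s < d1" "2 * s < d2" using d1 d2 by (auto simp: s_def)
    have nb: "norm (u *\<^sub>R axis a 1 + v *\<^sub>R axis b (1::real)) < min d1 d2" if "\<bar>u\<bar> \<le> \<bar>s\<bar>" "\<bar>v\<bar> \<le> \<bar>s\<bar>" for u v and a b :: 'n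
      using norm_two_axis[of u a v b] that s by auto
    have inU: "u *\<^sub>R axis a 1 + v *\<^sub>R axis b (1::real) \<in> U" if "\<bar>u\<bar> \<le> \<bar>s\<bar>" "\<bar>v\<bar> \<le> \<bar>s\<bar>" for u v and a b :: 'n
      using nb[OF that, of a b] d1(2) by auto
    obtain \<xi>1 \<eta>1 where 1: "\<bar>\<xi>1\<bar> \<le> \<bar>s\<bar>" "\<bar>\<eta>1\<bar> \<le> \<bar>s\<bar>"
      "f (s *\<^sub>R axis i 1 + s *\<^sub>R axis j 1) - f (s *\<^sub>R axis i 1) - f (s *\<^sub>R axis j 1) + f 0
       = s * s * D2 j i (\<xi>1 *\<^sub>R axis i 1 + \<eta>1 *\<^sub>R axis j 1)"
      using double_diff[OF PD1 PD2 inU, of s i j] by blast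
    obtain \<xi>2 \<eta>2 where 2: "\<bar>\<xi>2\<bar> \<le> \<bar>s\<bar>" "\<bar>\<eta>2\<bar> \<le> \<bar>s\<bar>"
      "f (s *\<^sub>R axis j 1 + s *\<^sub>R axis i 1) - f (s *\<^sub>R axis j 1) - f (s *\<^sub>R axis i 1) + f 0
       = s * s * D2 i j (\<xi>2 *\<^sub>R axis j 1 + \<eta>2 *\<^sub>R axis i 1)"
      using double_diff[OF PD1 PD2 inU, of s j i] by blast
    have "s * s * D2 j i (\<xi>1 *\<^sub>R axis i 1 + \<eta>1 *\<^sub>R axis j 1) = s * s * D2 i j (\<xi>2 *\<^sub>R axis j 1 + \<eta>2 *\<^sub>R axis i 1)"
      using 1(3) 2(3) unfolding add.commute[of "s *\<^sub>R axis j 1" "s *\<^sub>R axis i 1"] by linarith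
    then have eq: "D2 j i (\<xi>1 *\<^sub>R axis i 1 + \<eta>1 *\<^sub>R axis j 1) = D2 i j (\<xi>2 *\<^sub>R axis j 1 + \<eta>2 *\<^sub>R axis i 1)"
      using s(1) by simp
    have a: "\<bar>D2 j i (\<xi>1 *\<^sub>R axis i 1 + \<eta>1 *\<^sub>R axis j 1) - D2 j i 0\<bar> < e"
      using d2(2)[of _ "(j,i)"] nb[OF 1(1,2), of i j] by auto
    have b: "\<bar>D2 i j (\<xi>2 *\<^sub>R axis j 1 + \<eta>2 *\<^sub>R axis i 1) - D2 i j 0\<bar> < e"
      using d2(2)[of _ "(i,j)"] nb[OF 2(1,2), of j i] by auto
    show ?thesis using a b eq by linarith
  qed
  have "\<bar>D2 j i 0 - D2 i j 0\<bar> \<le> 0"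
  proof (rule field_le_epsilon)
    fix e :: real assume "0 < e"
    then have "\<bar>D2 j i 0 - D2 i j 0\<bar> \<le> 2 * (e/2)" by (intro that_e) simp
    then show "\<bar>D2 j i 0 - D2 i j 0\<bar> \<le> 0 + e" by simp
  qed
  then show ?thesis by simp
qed

lemma taylor2:
  fixes \<phi> :: "real \<Rightarrow> real"
  assumes d1: "\<And>s. \<bar>s\<bar> \<le> \<bar>a\<bar> \<Longrightarrow> (\<phi> has_real_derivative \<phi>1 s) (at s)"
      and d2: "\<And>s. \<bar>s\<bar> \<le> \<bar>a\<bar> \<Longrightarrow> (\<phi>1 has_real_derivative \<phi>2 s) (at s)"
  shows "\<exists>t. \<bar>t\<bar> \<le> \<bar>a\<bar> \<and> \<phi> a = \<phi> 0 + \<phi>1 0 * a + \<phi>2 t / 2 * a\<^sup>2"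
proof (cases "a = 0")
  case True then show ?thesis by (intro exI[of _ 0]) simp
next
  case False
  define diff where "diff m = (if m = 0 then \<phi> else if m = 1 then \<phi>1 else \<phi>2)" for m :: nat
  have "\<exists>t. (if a < 0 then a < t \<and> t < 0 else 0 < t \<and> t < a) \<and>
         \<phi> a = (\<Sum>m<2. diff m 0 / fact m * (a - 0) ^ m) + diff 2 t / fact 2 * (a - 0) ^ 2"
  proof (rule Taylor[where a="-\<bar>a\<bar>" and b="\<bar>a\<bar>"])
    show "\<forall>m t. m < 2 \<and> - \<bar>a\<bar> \<le> t \<and> t \<le> \<bar>a\<bar> \<longrightarrow> (diff m has_real_derivative diff (Suc m) t) (at t)"
    proof (intro allI impI)
      fix m :: nat and t assume m: "m < 2 \<and> - \<bar>a\<bar> \<le> t \<and> t \<le> \<bar>a\<bar>"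
      then have t: "\<bar>t\<bar> \<le> \<bar>a\<bar>" by auto
      from m have "m = 0 \<or> m = 1" by auto
      then show "(diff m has_real_derivative diff (Suc m) t) (at t)"
        using d1[OF t] d2[OF t] by (auto simp: diff_def)
    qed
  qed (use False in \<open>auto simp: diff_def\<close>)
  then obtain t where t: "(if a < 0 then a < t \<and> t < 0 else 0 < t \<and> t < a)"
    "\<phi> a = (\<Sum>m<2. diff m 0 / fact m * (a - 0) ^ m) + diff 2 t / fact 2 * (a - 0) ^ 2" by blast
  have "\<bar>t\<bar> \<le> \<bar>a\<bar>" using t(1) by (auto split: if_splits)
  moreover have "\<phi> a = \<phi> 0 + \<phi>1 0 * a + \<phi>2 t / 2 * a\<^sup>2"
    using t(2) by (simp add: diff_def numeral_2_eq_2)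
  ultimately show ?thesis by blast
qed

lemma quad_step:
  fixes M :: "real^'n::finite^'n"
  assumes sym: "\<And>i j. M$i$j = M$j$i"
  shows "(p + a *\<^sub>R axis k 1) \<bullet> (M *v (p + a *\<^sub>R axis k 1))
     = p \<bullet> (M *v p) + 2 * a * (M *v p)$k + a\<^sup>2 * M$k$k"
proof -
  have 1: "p \<bullet> (M *v axis k 1) = (M *v p)$k"
    by (simp add: matrix_vector_mult_def inner_vec_def axis_def sym mult.commute if_distrib cong: if_cong)
  have 2: "(M *v axis k 1)$k = M$k$k"
    by (simp add: matrix_vector_mult_def axis_def if_distrib cong: if_cong)
  show ?thesis
    by (simp add: matrix_vector_right_distrib inner_add_left inner_add_right matrix_vector_mult_scaleR
        inner_axis' 1 2 power2_eq_square algebra_simps)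
qed

lemma abs3: "\<bar>x + y + z\<bar> \<le> \<bar>x\<bar> + \<bar>y\<bar> + \<bar>z::real\<bar>" by arith

lemma second_order:
  fixes f :: "real^'n::finite \<Rightarrow> real"
  assumes U: "open U" "0 \<in> U" and PD1: "hasPD U f D1" and PD2: "\<And>i. hasPD U (D1 i) (\<lambda>j. D2 j i)"
    and cont: "\<And>i j. isCont (D2 i j) 0" and eps: "\<epsilon> > 0"
  shows "\<exists>\<delta>>0. \<forall>h. norm h < \<delta> \<longrightarrow>
    \<bar>f h - f 0 - (\<Sum>i\<in>UNIV. h$i * D1 i 0) - (h \<bullet> ((\<chi> i j. D2 i j 0) *v h)) / 2\<bar> \<le> \<epsilon> * (norm h)\<^sup>2"
proof -
  define M :: "real^'n^'n" where "M = (\<chi> i j. D2 i j 0)"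
  have sym: "M$i$j = M$j$i" for i j unfolding M_def using clairaut[OF U PD1 PD2 cont] by simp
  obtain d1 where d1: "d1 > 0" "ball 0 d1 \<subseteq> U" using U open_contains_ball by blast
  define e where "e = \<epsilon> / CARD('n)"
  have e: "e > 0" using eps by (simp add: e_def)
  obtain d2 where d2: "d2 > 0" "\<And>p y. norm y < d2 \<Longrightarrow> \<bar>D2 (fst p) (snd p) y - D2 (fst p) (snd p) 0\<bar> < e"
    using cont_choice[of "\<lambda>p. D2 (fst p) (snd p)", OF cont e] by blast
  have "\<exists>d>0. \<forall>k y. norm y < d \<longrightarrow> \<bar>D1 k y - D1 k 0 - (\<Sum>j\<in>UNIV. y$j * D2 j k 0)\<bar> \<le> e/2 * norm y"
  proof (rule min_choice)
    fix k
    show "\<exists>d>0. \<forall>y. norm y < d \<longrightarrow> \<bar>D1 k y - D1 k 0 - (\<Sum>j\<in>UNIV. y$j * D2 j k 0)\<bar> \<le> e/2 * norm y"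
      using first_order[OF U PD2[of k], of "e/2"] cont e by auto
  qed
  then obtain d3 where d3: "d3 > 0" "\<And>k y. norm y < d3 \<Longrightarrow> \<bar>D1 k y - D1 k 0 - (\<Sum>j\<in>UNIV. y$j * D2 j k 0)\<bar> \<le> e/2 * norm y"
    by blast
  define d where "d = min d1 (min d2 d3)"
  have claim: "finite S \<Longrightarrow> \<forall>h. norm h < d \<longrightarrow>
     \<bar>f (pS S h) - f 0 - (\<Sum>i\<in>S. h$i * D1 i 0) - (pS S h \<bullet> (M *v pS S h)) / 2\<bar> \<le> real (card S) * e * (norm h)\<^sup>2" for S
  proof (induction S rule: finite_induct)
    case empty then show ?case by simp
  next
    case (insert k S)
    show ?case
    proof (intro allI impI)
      fix h :: "real^'n" assume h: "norm h < d"
      define p where "p = pS S h"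
      define a where "a = h$k"
      have inU: "p + s *\<^sub>R axis k 1 \<in> U" if "\<bar>s\<bar> \<le> \<bar>a\<bar>" for s
        using norm_pS_axis[OF insert(2) that[unfolded a_def]] h d1(2) by (auto simp: d_def p_def)
      obtain t where t: "\<bar>t\<bar> \<le> \<bar>a\<bar>" "f (p + a *\<^sub>R axis k 1) = f (p + 0 *\<^sub>R axis k 1) + D1 k (p + 0 *\<^sub>R axis k 1) * a
            + D2 k k (p + t *\<^sub>R axis k 1) / 2 * a\<^sup>2"
        using taylor2[of a "\<lambda>s. f (p + s *\<^sub>R axis k 1)" "\<lambda>s. D1 k (p + s *\<^sub>R axis k 1)" "\<lambda>s. D2 k k (p + s *\<^sub>R axis k 1)"]
          pd_shift[OF PD1 inU] pd_shift[OF PD2[of k] inU] by blast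
      have np: "norm p \<le> norm h" unfolding p_def by (rule norm_pS)
      have b1: "\<bar>D1 k p - D1 k 0 - (\<Sum>j\<in>UNIV. p$j * D2 j k 0)\<bar> \<le> e/2 * norm h"
      proof -
        have "norm p < d3" using np h by (simp add: d_def)
        then have "\<bar>D1 k p - D1 k 0 - (\<Sum>j\<in>UNIV. p$j * D2 j k 0)\<bar> \<le> e/2 * norm p" by (rule d3(2))
        also have "\<dots> \<le> e/2 * norm h" using np e by (simp add: mult_left_mono)
        finally show ?thesis .
      qed
      have "norm (p + t *\<^sub>R axis k 1) < d2"
        using norm_pS_axis[OF insert(2), of t h] t h by (auto simp: d_def p_def a_def)
      then have b2: "\<bar>D2 k k (p + t *\<^sub>R axis k 1) - D2 k k 0\<bar> \<le> e" using d2(2)[of _ "(k,k)"] by force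
      have Mp: "(M *v p)$k = (\<Sum>j\<in>UNIV. p$j * D2 j k 0)"
        by (simp add: matrix_vector_mult_def M_def mult.commute clairaut[OF U PD1 PD2 cont, of k])
      have IH: "\<bar>f p - f 0 - (\<Sum>i\<in>S. h$i * D1 i 0) - (p \<bullet> (M *v p)) / 2\<bar> \<le> real (card S) * e * (norm h)\<^sup>2"
        using insert(3) h by (simp add: p_def)
      have eq: "f (pS (insert k S) h) - f 0 - (\<Sum>i\<in>insert k S. h$i * D1 i 0) - (pS (insert k S) h \<bullet> (M *v pS (insert k S) h)) / 2
          = (f p - f 0 - (\<Sum>i\<in>S. h$i * D1 i 0) - (p \<bullet> (M *v p)) / 2)
            + a * (D1 k p - D1 k 0 - (\<Sum>j\<in>UNIV. p$j * D2 j k 0))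
            + a\<^sup>2 / 2 * (D2 k k (p + t *\<^sub>R axis k 1) - D2 k k 0)"
      proof -
        have s1: "(\<Sum>i\<in>insert k S. h$i * D1 i 0) = a * D1 k 0 + (\<Sum>i\<in>S. h$i * D1 i 0)"
          using insert(1,2) by (simp add: a_def)
        have q: "(p + a *\<^sub>R axis k 1) \<bullet> (M *v (p + a *\<^sub>R axis k 1)) = p \<bullet> (M *v p) + 2 * a * (\<Sum>j\<in>UNIV. p$j * D2 j k 0) + a\<^sup>2 * D2 k k 0"
          using quad_step[OF sym, of p a k] unfolding Mp by (simp add: M_def)
        show ?thesis
          unfolding pS_insert[OF insert(2)] p_def[symmetric] a_def[symmetric] s1 q
          using t(2) by (simp add: algebra_simps)
      qed
      have ah: "\<bar>a\<bar> \<le> norm h" unfolding a_def by (rule component_le_norm_cart)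
      have c1: "\<bar>a * (D1 k p - D1 k 0 - (\<Sum>j\<in>UNIV. p$j * D2 j k 0))\<bar> \<le> norm h * (e/2 * norm h)"
        unfolding abs_mult by (rule mult_mono[OF ah b1]) auto
      have "a\<^sup>2 \<le> (norm h)\<^sup>2" using ah by (metis abs_le_square_iff abs_norm_cancel)
      then have c2: "\<bar>a\<^sup>2 / 2 * (D2 k k (p + t *\<^sub>R axis k 1) - D2 k k 0)\<bar> \<le> (norm h)\<^sup>2 / 2 * e"
        unfolding abs_mult using b2 by (intro mult_mono) auto
      have "real (card (insert k S)) = real (card S) + 1" using insert(1,2) by simp
      show "\<bar>f (pS (insert k S) h) - f 0 - (\<Sum>i\<in>insert k S. h$i * D1 i 0) - (pS (insert k S) h \<bullet> (M *v pS (insert k S) h)) / 2\<bar>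
           \<le> real (card (insert k S)) * e * (norm h)\<^sup>2"
        unfolding eq
      proof (rule order_trans[OF abs3])
        show "\<bar>f p - f 0 - (\<Sum>i\<in>S. h $ i * D1 i 0) - p \<bullet> (M *v p) / 2\<bar> +
          \<bar>a * (D1 k p - D1 k 0 - (\<Sum>j\<in>UNIV. p $ j * D2 j k 0))\<bar> +
          \<bar>a\<^sup>2 / 2 * (D2 k k (p + t *\<^sub>R axis k 1) - D2 k k 0)\<bar>
          \<le> real (card (insert k S)) * e * (norm h)\<^sup>2"
          using IH c1 c2 \<open>real (card (insert k S)) = real (card S) + 1\<close>
          by (simp add: power2_eq_square algebra_simps)
      qed
    qed
  qed
  have "d > 0" using d1 d2 d3 by (simp add: d_def)
  moreover have "real CARD('n) * e = \<epsilon>" by (simp add: e_def)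
  ultimately show ?thesis using claim[of UNIV, OF finite_class.finite_UNIV] unfolding M_def by (intro exI[of _ d]) auto
qed

lemma smooth_PD1: "smooth_on U f \<Longrightarrow> hasPD U f (\<lambda>i. dpart [i] f)"
  unfolding smooth_on_def hasPD_def by (metis dpart.simps(1))

lemma smooth_PD2: "smooth_on U f \<Longrightarrow> hasPD U (dpart [i] f) (\<lambda>j. dpart [j, i] f)"
  unfolding smooth_on_def hasPD_def by blast

lemma smooth_cont: "smooth_on U f \<Longrightarrow> open U \<Longrightarrow> x \<in> U \<Longrightarrow> isCont (dpart is f) x"
  unfolding smooth_on_def using continuous_on_eq_continuous_at by blast

lemma hessian_sym:
  assumes "open U" "0 \<in> U" "smooth_on U f"
  shows "hessian f 0 $ i $ j = hessian f 0 $ j $ i"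
proof -
  have c: "\<And>i j. isCont (dpart [i,j] f) 0" using smooth_cont[OF assms(3,1,2)] by blast
  show ?thesis
    using clairaut[OF assms(1,2) smooth_PD1[OF assms(3)] smooth_PD2[OF assms(3)] c]
    by (simp add: hessian_def del: dpart.simps)
qed

lemma expansion:
  assumes "open U" "0 \<in> U" "smooth_on U f" "f 0 = 0" "grad f 0 = 0" "\<epsilon> > 0"
  shows "\<exists>\<delta>>0. \<forall>h. norm h < \<delta> \<longrightarrow> \<bar>f h - (h \<bullet> (hessian f 0 *v h)) / 2\<bar> \<le> \<epsilon> * (norm h)\<^sup>2"
proof -
  have g: "dpart [i] f 0 = 0" for i using assms(5) unfolding grad_def by (metis vec_lambda_beta zero_index)
  have c: "\<And>i j. isCont (dpart [i,j] f) 0" using smooth_cont[OF assms(3,1,2)] by blast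
  show ?thesis
    using second_order[OF assms(1,2) smooth_PD1[OF assms(3)] smooth_PD2[OF assms(3)] c assms(6)]
      assms(4) g by (simp add: hessian_def del: dpart.simps)
qed

lemma sym_bilin:
  fixes H :: "real^'n::finite^'n"
  assumes sym: "\<And>i j. H$i$j = H$j$i"
  shows "u \<bullet> (H *v v) = v \<bullet> (H *v u)"
proof -
  have "u \<bullet> (H *v v) = (\<Sum>i\<in>UNIV. \<Sum>j\<in>UNIV. u$i * H$i$j * v$j)"
    by (simp add: inner_vec_def matrix_vector_mult_def sum_distrib_left mult.assoc)
  also have "\<dots> = (\<Sum>j\<in>UNIV. \<Sum>i\<in>UNIV. u$i * H$i$j * v$j)" by (rule sum.swap)
  also have "\<dots> = v \<bullet> (H *v u)"
    by (simp add: inner_vec_def matrix_vector_mult_def sum_distrib_left sym mult.commute mult.left_commute)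
  finally show ?thesis .
qed

lemma quad_scale: "(s *\<^sub>R x) \<bullet> (H *v (s *\<^sub>R x)) = s\<^sup>2 * (x \<bullet> ((H::real^'n::finite^'n) *v x))"
  by (simp only: matrix_vector_mult_scaleR inner_scaleR_left inner_scaleR_right mult.assoc power2_eq_square)

lemma quad_nonneg:
  fixes H :: "real^'n::finite^'n" and f :: "real^'n \<Rightarrow> real"
  assumes exp: "\<And>\<epsilon>. \<epsilon> > 0 \<Longrightarrow> \<exists>\<delta>>0. \<forall>h. norm h < \<delta> \<longrightarrow> \<bar>f h - (h \<bullet> (H *v h)) / 2\<bar> \<le> \<epsilon> * (norm h)\<^sup>2"
    and nn: "d > 0" "\<And>h. norm h < d \<Longrightarrow> f h \<ge> 0"
  shows "x \<bullet> (H *v x) \<ge> 0"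
proof (rule ccontr)
  assume neg: "\<not> x \<bullet> (H *v x) \<ge> 0"
  then have x0: "x \<noteq> 0" by auto
  then have nx: "norm x > 0" by simp
  define \<epsilon> where "\<epsilon> = - (x \<bullet> (H *v x)) / (4 * (norm x)\<^sup>2)"
  have "\<epsilon> > 0" using neg nx unfolding \<epsilon>_def by (intro divide_pos_pos) auto
  then obtain \<delta> where \<delta>: "\<delta> > 0" "\<And>h. norm h < \<delta> \<Longrightarrow> \<bar>f h - (h \<bullet> (H *v h)) / 2\<bar> \<le> \<epsilon> * (norm h)\<^sup>2"
    using exp by blast
  define s where "s = min \<delta> d / (2 * norm x)"
  have s: "s > 0" using \<delta> nn nx by (simp add: s_def)
  have ns: "norm (s *\<^sub>R x) < \<delta>" "norm (s *\<^sub>R x) < d" using s \<delta> nn nx by (auto simp: s_def field_simps)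
  have "f (s *\<^sub>R x) \<le> (s *\<^sub>R x) \<bullet> (H *v (s *\<^sub>R x)) / 2 + \<epsilon> * (norm (s *\<^sub>R x))\<^sup>2"
    using \<delta>(2)[OF ns(1)] by linarith
  also have "\<dots> = s\<^sup>2 * ((x \<bullet> (H *v x)) / 2 + \<epsilon> * (norm x)\<^sup>2)"
    using s by (simp add: quad_scale power_mult_distrib algebra_simps power2_eq_square)
  also have "\<dots> = s\<^sup>2 * ((x \<bullet> (H *v x)) / 4)" using nx by (simp add: \<epsilon>_def field_simps)
  also have "\<dots> < 0" using s neg by (simp add: mult_pos_neg)
  finally show False using nn(2)[OF ns(2)] by linarith
qed

lemma quad_pd:
  fixes H :: "real^'n::finite^'n"
  assumes sym: "\<And>i j. H$i$j = H$j$i" and nn: "\<And>x. x \<bullet> (H *v x) \<ge> 0" and det: "det H \<noteq> 0"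
    and "v \<noteq> 0"
  shows "v \<bullet> (H *v v) > 0"
proof (rule ccontr)
  assume "\<not> v \<bullet> (H *v v) > 0"
  with nn[of v] have q0: "v \<bullet> (H *v v) = 0" by simp
  define w where "w = H *v v"
  have exp: "(v + s *\<^sub>R w) \<bullet> (H *v (v + s *\<^sub>R w)) = 2 * s * (w \<bullet> w) + s\<^sup>2 * (w \<bullet> (H *v w))" for s
    using q0 sym_bilin[OF sym, of v w]
    by (simp add: matrix_vector_right_distrib matrix_vector_mult_scaleR inner_add_left inner_add_right
        power2_eq_square w_def algebra_simps)
  have "w = 0"
  proof (rule ccontr)
    assume "w \<noteq> 0"
    then have ww: "w \<bullet> w > 0" by simp
    define qw where "qw = w \<bullet> (H *v w)"
    have qw: "qw \<ge> 0" using nn by (simp add: qw_def)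
    define s where "s = - (w \<bullet> w) / (qw + 1)"
    have "2 * s * (w \<bullet> w) + s\<^sup>2 * qw < 0"
    proof -
      have "s\<^sup>2 * qw = (w \<bullet> w)\<^sup>2 * qw / (qw + 1)\<^sup>2" by (simp add: s_def power_divide)
      also have "\<dots> \<le> (w \<bullet> w)\<^sup>2 / (qw + 1)" using qw
        by (simp add: power2_eq_square divide_simps) (simp add: mult_left_mono mult_nonneg_nonneg)
      finally have "s\<^sup>2 * qw \<le> (w \<bullet> w)\<^sup>2 / (qw + 1)" .
      moreover have "2 * s * (w \<bullet> w) = - 2 * (w \<bullet> w)\<^sup>2 / (qw + 1)" by (simp add: s_def power2_eq_square)
      moreover have "(w \<bullet> w)\<^sup>2 / (qw + 1) > 0" using ww qw by simp
      ultimately show ?thesis by linarith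
    qed
    then show False using nn[of "v + s *\<^sub>R w"] exp[of s] by (simp add: qw_def)
  qed
  then have "H *v v = 0" by (simp add: w_def)
  moreover have "inj ((*v) H)"
    using det det_nz_iff_inj[OF matrix_vector_mul_linear[of H]] by (simp add: matrix_of_matrix_vector_mul)
  ultimately show False using assms(4) by (simp add: vec.inj_iff_eq_0)
qed

lemma quad_lower:
  fixes H :: "real^'n::finite^'n"
  assumes pd: "\<And>x. x \<noteq> 0 \<Longrightarrow> x \<bullet> (H *v x) > 0"
  shows "\<exists>lam>0. \<forall>x. x \<bullet> (H *v x) \<ge> lam * (norm x)\<^sup>2"
proof -
  have cont: "continuous_on (sphere 0 1) (\<lambda>x. x \<bullet> (H *v x))"
    by (intro continuous_intros matrix_vector_mult_linear_continuous_on[THEN continuous_on_compose2[of UNIV]]) auto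
  have ne: "sphere (0::real^'n) 1 \<noteq> {}" by simp
  obtain x0 where x0: "x0 \<in> sphere 0 1" "\<And>y. y \<in> sphere 0 1 \<Longrightarrow> x0 \<bullet> (H *v x0) \<le> y \<bullet> (H *v y)"
    using continuous_attains_inf[OF compact_sphere ne cont] by blast
  have "x0 \<noteq> 0" using x0(1) by auto
  then have pos: "x0 \<bullet> (H *v x0) > 0" by (rule pd)
  show ?thesis
  proof (intro exI[of _ "x0 \<bullet> (H *v x0)"] conjI allI pos)
    fix x :: "real^'n"
    show "x \<bullet> (H *v x) \<ge> x0 \<bullet> (H *v x0) * (norm x)\<^sup>2"
    proof (cases "x = 0")
      case True then show ?thesis by simp
    next
      case False
      then have nx: "norm x > 0" by simp
      have "(inverse (norm x) *\<^sub>R x) \<in> sphere 0 1" using nx by (simp add: norm_scaleR)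
      then have "x0 \<bullet> (H *v x0) \<le> (inverse (norm x) *\<^sub>R x) \<bullet> (H *v (inverse (norm x) *\<^sub>R x))" by (rule x0(2))
      also have "\<dots> = (x \<bullet> (H *v x)) / (norm x)\<^sup>2" unfolding quad_scale by (simp add: power_inverse divide_inverse_commute)
      finally show ?thesis using nx by (simp add: field_simps)
    qed
  qed
qed

definition lc :: "('n::finite \<Rightarrow> real^'m::finite) \<Rightarrow> real^'n \<Rightarrow> real^'m" where
  "lc c x = (\<Sum>i\<in>UNIV. x$i *\<^sub>R c i)"

lemma lc_add: "lc c (x + y) = lc c x + lc c y"
  by (simp add: lc_def scaleR_add_left sum.distrib)

lemma lc_axis: "lc c (a *\<^sub>R axis k 1) = a *\<^sub>R c k"
proof -
  have "lc c (a *\<^sub>R axis k 1) = (\<Sum>i\<in>UNIV. (if i = k then a *\<^sub>R c i else 0))"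
    unfolding lc_def by (rule sum.cong) (auto simp: axis_def)
  then show ?thesis by simp
qed

lemma lc_id: "lc (\<lambda>i. axis i 1) x = x"
  using basis_expansion[of x] by (simp add: lc_def scalar_mult_eq_scaleR)

lemma elim_step:
  fixes H :: "real^'n::finite^'n"
  assumes sym: "\<And>i j. H$i$j = H$j$i" and pd: "\<And>x. x \<noteq> 0 \<Longrightarrow> x \<bullet> (H *v x) > 0"
    and inj: "\<And>x. lc c x = 0 \<Longrightarrow> x = 0"
    and S: "\<And>i j. i \<in> S \<Longrightarrow> c i \<bullet> (H *v c j) = (if i = j then 1 else 0)"
    and k: "k \<notin> S"
  shows "\<exists>c'. (\<forall>x. lc c' x = 0 \<longrightarrow> x = 0) \<and> (\<forall>i\<in>insert k S. \<forall>j. c' i \<bullet> (H *v c' j) = (if i = j then 1 else 0))"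
proof -
  define B where "B u v = u \<bullet> (H *v v)" for u v
  have Bsym: "B u v = B v u" for u v unfolding B_def by (rule sym_bilin[OF sym])
  have "c k \<noteq> 0"
  proof
    assume "c k = 0"
    then have "lc c (1 *\<^sub>R axis k 1) = 0" by (simp only: lc_axis) simp
    then have "1 *\<^sub>R axis k (1::real) = 0" by (rule inj)
    then show False by (simp add: axis_eq_0_iff)
  qed
  then have a: "B (c k) (c k) > 0" unfolding B_def by (rule pd)
  define a where "a = B (c k) (c k)"
  define r where "r = 1 / sqrt a"
  have r: "r > 0" "r * r * a = 1" using a by (auto simp: r_def a_def)
  define \<beta> where "\<beta> j = (if j = k then r - 1 else - B (c k) (c j) / a)" for j
  define c' where "c' j = c j + \<beta> j *\<^sub>R c k" for j
  have expand: "B (c' i) (c' j) = B (c i) (c j) + \<beta> j * B (c i) (c k) + \<beta> i * B (c k) (c j) + \<beta> i * \<beta> j * a" for i j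
    unfolding c'_def B_def a_def
    by (simp add: matrix_vector_right_distrib matrix_vector_mult_scaleR inner_add_left inner_add_right algebra_simps)
  have ortho: "\<forall>i\<in>insert k S. \<forall>j. B (c' i) (c' j) = (if i = j then 1 else 0)"
  proof (intro ballI allI)
    fix i j assume i: "i \<in> insert k S"
    show "B (c' i) (c' j) = (if i = j then 1 else 0)"
    proof (cases "i = k")
      case True
      have "B (c' i) (c' j) = r * (B (c k) (c j) + \<beta> j * a)"
        unfolding expand True using Bsym[of "c k" "c k"] by (simp add: \<beta>_def a_def algebra_simps)
      also have "\<dots> = (if i = j then 1 else 0)"
      proof (cases "j = k")
        case True
        then show ?thesis using r \<open>i = k\<close> by (simp add: \<beta>_def a_def[symmetric] algebra_simps)
      next
        case False
        then show ?thesis using a \<open>i = k\<close> by (simp add: \<beta>_def a_def[symmetric])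
      qed
      finally show ?thesis .
    next
      case False
      with i have iS: "i \<in> S" by simp
      have 1: "B (c i) (c k) = 0" using S[OF iS, of k] False by (simp add: B_def)
      have 2: "B (c k) (c i) = 0" using 1 Bsym by simp
      have bi: "\<beta> i = 0" using False 2 by (simp add: \<beta>_def)
      show ?thesis unfolding expand bi 1 using S[OF iS, of j] by (simp add: B_def)
    qed
  qed
  have lc': "lc c' x = lc c (x + (\<Sum>j\<in>UNIV. x$j * \<beta> j) *\<^sub>R axis k 1)" for x
    unfolding lc_add lc_axis
    by (simp add: lc_def c'_def scaleR_add_right sum.distrib scaleR_sum_left scaleR_scaleR)
  have injc': "x = 0" if "lc c' x = 0" for x
  proof -
    define \<gamma> where "\<gamma> = (\<Sum>j\<in>UNIV. x$j * \<beta> j)"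
    have y: "x + \<gamma> *\<^sub>R axis k 1 = 0" using inj that lc' by (simp add: \<gamma>_def)
    have xj: "x$j = 0" if "j \<noteq> k" for j
      using arg_cong[OF y, of "\<lambda>v. v$j"] that by (simp add: axis_def)
    have xe: "x = x$k *\<^sub>R axis k 1"
      using xj by (auto simp: vec_eq_iff axis_def)
    have "\<gamma> = (\<Sum>j\<in>UNIV. if j = k then x$k * \<beta> j else 0)"
      unfolding \<gamma>_def by (rule sum.cong) (use xj in auto)
    then have "\<gamma> = x$k * \<beta> k" by simp
    then have "x$k + x$k * (r - 1) = 0" using arg_cong[OF y, of "\<lambda>v. v$k"] by (simp add: \<beta>_def axis_def)
    then have "x$k * r = 0" by (simp add: algebra_simps)
    then have "x$k = 0" using r by simp
    then show ?thesis using xe by simp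
  qed
  show ?thesis using ortho injc' unfolding B_def by blast
qed

lemma elim_all:
  fixes H :: "real^'n::finite^'n"
  assumes sym: "\<And>i j. H$i$j = H$j$i" and pd: "\<And>x. x \<noteq> 0 \<Longrightarrow> x \<bullet> (H *v x) > 0"
  shows "\<exists>c::'n \<Rightarrow> real^'n. \<forall>i j. c i \<bullet> (H *v c j) = (if i = j then 1 else (0::real))"
proof -
  have "finite S \<Longrightarrow> \<exists>c::'n \<Rightarrow> real^'n. (\<forall>x. lc c x = 0 \<longrightarrow> x = 0) \<and> (\<forall>i\<in>S. \<forall>j. c i \<bullet> (H *v c j) = (if i = j then 1 else 0))" for S :: "'n set"
  proof (induction S rule: finite_induct)
    case empty
    show ?case by (intro exI[of _ "\<lambda>i. axis i 1"]) (simp add: lc_id)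
  next
    case (insert k S)
    then obtain c where "\<forall>x. lc c x = 0 \<longrightarrow> x = 0" "\<forall>i\<in>S. \<forall>j. c i \<bullet> (H *v c j) = (if i = j then 1 else 0)" by blast
    then show ?case using elim_step[OF sym pd, of c S k] insert(2) by blast
  qed
  from this[of UNIV, OF finite_class.finite_UNIV] obtain c :: "'n \<Rightarrow> real^'n" where "\<forall>i j. c i \<bullet> (H *v c j) = (if i = j then 1 else 0)" by blast
  then show ?thesis by blast
qed

lemma congruence:
  fixes H :: "real^'n::finite^'n"
  assumes sym: "\<And>i j. H$i$j = H$j$i" and pd: "\<And>x. x \<noteq> 0 \<Longrightarrow> x \<bullet> (H *v x) > 0"
  shows "\<exists>T. (\<forall>x. (T *v x) \<bullet> (H *v (T *v x)) = (norm x)\<^sup>2) \<and> (det T)\<^sup>2 * det H = 1"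
proof -
  obtain c :: "'n \<Rightarrow> real^'n" where c: "\<And>i j. c i \<bullet> (H *v c j) = (if i = j then 1 else (0::real))"
    using elim_all[of H] sym pd by blast
  define T :: "real^'n^'n" where "T = (\<chi> r i. c i $ r)"
  have Tx: "T *v x = lc c x" for x
    by (simp add: T_def lc_def vec_eq_iff matrix_vector_mult_def mult.commute)
  have Hlc: "v \<bullet> (H *v lc c x) = (\<Sum>j\<in>UNIV. x$j * (v \<bullet> (H *v c j)))" for v x
    by (simp add: lc_def vec.sum matrix_vector_mult_scaleR inner_sum_right)
  have TtH: "(transpose T *v w)$i = c i \<bullet> w" for w i
    by (simp add: T_def transpose_def matrix_vector_mult_def inner_vec_def mult.commute)
  have q: "(T *v x) \<bullet> (H *v (T *v x)) = (norm x)\<^sup>2" for x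
  proof -
    have "(T *v x) \<bullet> (H *v (T *v x)) = (\<Sum>i\<in>UNIV. x$i * (c i \<bullet> (H *v lc c x)))"
      unfolding Tx by (simp add: lc_def inner_sum_left)
    also have "\<dots> = (\<Sum>i\<in>UNIV. x$i * x$i)"
      unfolding Hlc c by (simp add: if_distrib cong: if_cong)
    also have "\<dots> = (norm x)\<^sup>2" by (simp add: power2_norm_eq_inner inner_vec_def)
    finally show ?thesis .
  qed
  have "transpose T ** H ** T = mat 1"
  proof (rule iffD2[OF matrix_eq], rule allI)
    fix x
    have "(transpose T ** H ** T) *v x = transpose T *v (H *v (T *v x))"
      by (metis matrix_mul_assoc matrix_vector_mul_assoc)
    also have "\<dots> = x"
      unfolding vec_eq_iff TtH Tx Hlc c by (simp add: if_distrib cong: if_cong)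
    finally show "(transpose T ** H ** T) *v x = mat 1 *v x" by simp
  qed
  then have "det (transpose T ** H ** T) = 1" by simp
  then have "(det T)\<^sup>2 * det H = 1" by (simp add: det_mul det_transpose power2_eq_square algebra_simps)
  then show ?thesis using q by blast
qed

proposition
 fixes f :: "real^'n::finite \<Rightarrow> real^'n"
  assumes "linear f" "S \<in> lmeasurable"
  shows measurable_linear_image_gen: "(f ` S) \<in> lmeasurable"
    and measure_linear_image_gen: "measure lebesgue (f ` S) = \<bar>det (matrix f)\<bar> * measure lebesgue S" (is "?Q f S")
proof -
  have "\<forall>S \<in> lmeasurable. (f ` S) \<in> lmeasurable \<and> ?Q f S"
  proof (rule induct_linear_elementary [OF \<open>linear f\<close>]; intro ballI)
    fix f g and S :: "(real,'n) vec set"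
    assume "linear f" and "linear g"
      and f [rule_format]: "\<forall>S \<in> lmeasurable. f ` S \<in> lmeasurable \<and> ?Q f S"
      and g [rule_format]: "\<forall>S \<in> lmeasurable. g ` S \<in> lmeasurable \<and> ?Q g S"
      and S: "S \<in> lmeasurable"
    then have gS: "g ` S \<in> lmeasurable"
      by blast
    show "(f \<circ> g) ` S \<in> lmeasurable \<and> ?Q (f \<circ> g) S"
      using f [OF gS] g [OF S] matrix_compose [OF \<open>linear g\<close> \<open>linear f\<close>]
      by (simp add: o_def image_comp abs_mult det_mul)
  next
    fix f :: "real^'n::_ \<Rightarrow> real^'n::_" and i and S :: "(real^'n::_) set"
    assume "linear f" and 0: "\<And>x. f x $ i = 0" and "S \<in> lmeasurable"
    then have "\<not> inj f"
      by (metis (full_types) linear_injective_imp_surjective one_neq_zero surjE vec_component)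
    have detf: "det (matrix f) = 0"
      using \<open>\<not> inj f\<close> det_nz_iff_inj[OF \<open>linear f\<close>] by blast
    show "f ` S \<in> lmeasurable \<and> ?Q f S"
    proof
      show "f ` S \<in> lmeasurable"
        using lmeasurable_iff_indicator_has_integral \<open>linear f\<close> \<open>\<not> inj f\<close> negligible_UNIV negligible_linear_singular_image by blast
      have "measure lebesgue (f ` S) = 0"
        by (meson \<open>\<not> inj f\<close> \<open>linear f\<close> negligible_imp_measure0 negligible_linear_singular_image)
      also have "\<dots> = \<bar>det (matrix f)\<bar> * measure lebesgue S"
        by (simp add: detf)
      finally show "?Q f S" .
    qed
  next
    fix c and S :: "(real^'n::_) set"
    assume "S \<in> lmeasurable"
    show "(\<lambda>a. \<chi> i. c i * a $ i) ` S \<in> lmeasurable \<and> ?Q (\<lambda>a. \<chi> i. c i * a $ i) S"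
    proof
      show "(\<lambda>a. \<chi> i. c i * a $ i) ` S \<in> lmeasurable"
        by (simp add: \<open>S \<in> lmeasurable\<close> measurable_stretch)
      show "?Q (\<lambda>a. \<chi> i. c i * a $ i) S"
        by (simp add: measure_stretch [OF \<open>S \<in> lmeasurable\<close>, of c] axis_def matrix_def det_diagonal)
    qed
  next
    fix m :: "'n" and n :: "'n" and S :: "(real, 'n) vec set"
    assume "m \<noteq> n" and "S \<in> lmeasurable"
    let ?h = "\<lambda>v::(real, 'n) vec. \<chi> i. v $ Transposition.transpose m n i"
    have lin: "linear ?h"
      by (rule linearI) (simp_all add: plus_vec_def scaleR_vec_def)
    have meq: "measure lebesgue ((\<lambda>v::(real, 'n) vec. \<chi> i. v $ Transposition.transpose m n i) ` cbox a b)
             = measure lebesgue (cbox a b)" for a b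
    proof (cases "cbox a b = {}")
      case True then show ?thesis
        by simp
    next
      case False
      then have him: "?h ` (cbox a b) \<noteq> {}"
        by blast
      have eq: "?h ` (cbox a b) = cbox (?h a) (?h b)"
        by (auto simp: image_iff lambda_swap_Galois mem_box_cart) (metis transpose_involutory)+
      show ?thesis
        using him prod.permute [OF permutes_swap_id, where S=UNIV and g="\<lambda>i. (b - a)$i", symmetric]
        by (simp add: eq content_cbox_cart False)
    qed
    have "(\<chi> i j. if Transposition.transpose m n i = j then 1 else 0) = (\<chi> i j. if j = Transposition.transpose m n i then 1 else (0::real))"
      by (auto intro!: Cart_lambda_cong)
    then have "matrix ?h = transpose(\<chi> i j. mat 1 $ i $ Transposition.transpose m n j)"
      by (auto simp: matrix_eq transpose_def axis_def mat_def matrix_def)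
    then have 1: "\<bar>det (matrix ?h)\<bar> = 1"
      by (simp add: det_permute_columns permutes_swap_id sign_swap_id abs_mult)
    show "?h ` S \<in> lmeasurable \<and> ?Q ?h S"
      using measure_linear_sufficient [OF lin \<open>S \<in> lmeasurable\<close>] meq 1 by force
  next
    fix m n :: "'n" and S :: "(real, 'n) vec set"
    assume "m \<noteq> n" and "S \<in> lmeasurable"
    let ?h = "\<lambda>v::(real, 'n) vec. \<chi> i. if i = m then v $ m + v $ n else v $ i"
    have lin: "linear ?h"
      by (rule linearI) (auto simp: algebra_simps plus_vec_def scaleR_vec_def vec_eq_iff)
    have "matrix ?h = (\<chi> k. if k = m then row m (mat 1) + 1 *s row n (mat 1) else row k (mat 1 :: real^'n^'n))"
      by (simp add: matrix_def vec_eq_iff row_def mat_def axis_def)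
    then have 1: "det(matrix ?h) = 1"
      using det_row_operation[OF \<open>m \<noteq> n\<close>, of "mat 1 :: real^'n^'n" 1] by simp
    have meq: "measure lebesgue (?h ` (cbox a b)) = measure lebesgue (cbox a b)" for a b
    proof (cases "cbox a b = {}")
      case True then show ?thesis by simp
    next
      case False
      then have ne: "(+) (\<chi> i. if i = n then - a $ n else 0) ` cbox a b \<noteq> {}"
        by auto
      let ?v = "\<chi> i. if i = n then - a $ n else 0"
      have "?h ` cbox a b
            = (+) (\<chi> i. if i = m \<or> i = n then a $ n else 0) ` ?h ` (+) ?v ` (cbox a b)"
        using \<open>m \<noteq> n\<close> unfolding image_comp o_def by (force simp: vec_eq_iff)
      then have "measure lebesgue (?h ` (cbox a b))
               = measure lebesgue ((\<lambda>v. \<chi> i. if i = m then v $ m + v $ n else v $ i) `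
                                   (+) ?v ` cbox a b)"
        by (rule ssubst) (rule measure_translation)
      also have "\<dots> = measure lebesgue ((\<lambda>v. \<chi> i. if i = m then v $ m + v $ n else v $ i) ` cbox (?v +a) (?v + b))"
        by (metis (no_types, lifting) cbox_translation)
      also have "\<dots> = measure lebesgue ((+) ?v ` cbox a b)"
        apply (subst measure_shear_interval)
        using \<open>m \<noteq> n\<close> ne apply auto
        apply (simp add: cbox_translation)
        by (metis cbox_borel cbox_translation measure_completion sets_lborel)
      also have "\<dots> = measure lebesgue (cbox a b)"
        by (rule measure_translation)
        finally show ?thesis .
      qed
    show "?h ` S \<in> lmeasurable \<and> ?Q ?h S"
      using measure_linear_sufficient [OF lin \<open>S \<in> lmeasurable\<close>] meq 1 by force
  qed
  with assms show "(f ` S) \<in> lmeasurable" "?Q f S"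
    by metis+
qed

lemma measure_ball_scale:
  assumes "r \<ge> 0"
  shows "measure lebesgue (ball (0::real^'n::finite) r) = r ^ CARD('n) * measure lebesgue (ball (0::real^'n) 1)"
proof -
  have "emeasure lebesgue (ball (0::real^'n) r) = ennreal (r ^ CARD('n)) * emeasure lebesgue (ball (0::real^'n) 1)"
    using emeasure_lebesgue_ball_conv_unit_ball[OF assms, of "0::real^'n"] by simp
  then show ?thesis unfolding measure_def using assms by (simp add: enn2real_mult)
qed

lemma ellipsoid_measure:
  fixes H T :: "real^'n::finite^'n"
  assumes q: "\<And>x. (T *v x) \<bullet> (H *v (T *v x)) = (norm x)\<^sup>2" and d: "(det T)\<^sup>2 * det H = 1"
    and r: "r \<ge> 0"
  shows "{x. x \<bullet> (H *v x) < r} \<in> lmeasurable"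
    and "measure lebesgue {x. x \<bullet> (H *v x) < r} = sqrt r ^ CARD('n) * measure lebesgue (ball (0::real^'n) 1) / sqrt (det H)"
proof -
  have dT: "det T \<noteq> 0" using d by auto
  have lin: "linear ((*v) T)" by (rule matrix_vector_mul_linear)
  have inj: "inj ((*v) T)" using dT det_nz_iff_inj[OF lin] by (simp add: matrix_of_matrix_vector_mul)
  have surj: "surj ((*v) T)" by (rule linear_inj_imp_surj[OF lin inj])
  have eq: "{x. x \<bullet> (H *v x) < r} = (*v) T ` ball 0 (sqrt r)"
  proof safe
    fix x assume x: "x \<bullet> (H *v x) < r"
    obtain y where y: "x = T *v y" using surj by (metis surjD)
    have "(norm y)\<^sup>2 < r" using x q[of y] y by simp
    then have "norm y < sqrt r" using r real_less_rsqrt by blast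
    then show "x \<in> (*v) T ` ball 0 (sqrt r)" using y by auto
  next
    fix y :: "real^'n" assume "y \<in> ball 0 (sqrt r)"
    then have "norm y < sqrt r" by simp
    then have "(norm y)\<^sup>2 < r" using r by (metis norm_ge_zero real_sqrt_less_iff real_sqrt_abs abs_norm_cancel power2_abs)
    then show "(T *v y) \<bullet> (H *v (T *v y)) < r" using q by simp
  qed
  show "{x. x \<bullet> (H *v x) < r} \<in> lmeasurable"
    unfolding eq by (rule measurable_linear_image_gen[OF lin]) simp
  have dH: "det H > 0" using d by (metis not_le mult_nonneg_nonpos zero_le_power2 zero_less_one not_one_le_zero mult_le_0_iff)
  have absT: "\<bar>det T\<bar> = 1 / sqrt (det H)"
  proof -
    have "(det T)\<^sup>2 = 1 / det H" using d dH by (simp add: field_simps)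
    then have "sqrt ((det T)\<^sup>2) = sqrt (1 / det H)" by simp
    then show ?thesis by (simp add: real_sqrt_divide)
  qed
  have "measure lebesgue {x. x \<bullet> (H *v x) < r} = \<bar>det T\<bar> * measure lebesgue (ball (0::real^'n) (sqrt r))"
    unfolding eq using measure_linear_image_gen[OF lin, of "ball 0 (sqrt r)"] by (simp add: matrix_of_matrix_vector_mul)
  also have "\<dots> = sqrt r ^ CARD('n) * measure lebesgue (ball (0::real^'n) 1) / sqrt (det H)"
    unfolding absT measure_ball_scale[OF real_sqrt_ge_zero[OF r]] by simp
  finally show "measure lebesgue {x. x \<bullet> (H *v x) < r} = sqrt r ^ CARD('n) * measure lebesgue (ball (0::real^'n) 1) / sqrt (det H)" .
qed

lemma int_bdd_cont:
  fixes g :: "real^'n::finite \<Rightarrow> real"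
  assumes "continuous_on S g" "S \<in> lmeasurable" "\<And>x. x \<in> S \<Longrightarrow> \<bar>g x\<bar> \<le> C"
  shows "g integrable_on S"
proof -
  have S: "S \<in> sets lebesgue" using assms(2) by (simp add: fmeasurableD)
  have "g absolutely_integrable_on S"
    by (rule measurable_bounded_by_integrable_imp_absolutely_integrable[where g="\<lambda>x. C"])
       (use assms S in \<open>auto simp: continuous_imp_measurable_on_sets_lebesgue integrable_on_const\<close>)
  then show ?thesis by (simp add: absolutely_integrable_on_def)
qed

locale ell =
  fixes H T :: "real^'n::finite^'n"
  assumes q: "\<And>x. (T *v x) \<bullet> (H *v (T *v x)) = (norm x)\<^sup>2" and d: "(det T)\<^sup>2 * det H = 1"
    and pd: "\<And>x. x \<noteq> 0 \<Longrightarrow> x \<bullet> (H *v x) > 0"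
begin

definition "Cst = measure lebesgue (ball (0::real^'n) 1) / sqrt (det H)"

lemma Q_nonneg: "x \<bullet> (H *v x) \<ge> 0"
  using pd[of x] by (cases "x = 0") auto

lemma Q_cont: "continuous_on S (\<lambda>x. x \<bullet> (H *v x))"
  by (intro continuous_intros matrix_vector_mult_linear_continuous_on[THEN continuous_on_compose2[of UNIV]]) auto

lemma E_meas: "r \<ge> 0 \<Longrightarrow> {x. x \<bullet> (H *v x) < r} \<in> lmeasurable"
  using ellipsoid_measure(1)[OF q d] by blast

lemma E_measure: "r \<ge> 0 \<Longrightarrow> measure lebesgue {x. x \<bullet> (H *v x) < r} = sqrt r ^ CARD('n) * Cst"
  using ellipsoid_measure(2)[OF q d] by (simp add: Cst_def)

definition "gg r x = (if x \<bullet> (H *v x) < r then r - x \<bullet> (H *v x) else 0)"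

lemma gg_int: assumes "r \<ge> 0" shows "gg r integrable_on UNIV"
proof -
  have "(\<lambda>x. r - x \<bullet> (H *v x)) integrable_on {x. x \<bullet> (H *v x) < r}"
  proof (rule int_bdd_cont[where C=r])
    show "continuous_on {x. x \<bullet> (H *v x) < r} (\<lambda>x. r - x \<bullet> (H *v x))"
      by (rule continuous_on_diff[OF continuous_on_const Q_cont])
    show "{x. x \<bullet> (H *v x) < r} \<in> lmeasurable" by (rule E_meas[OF assms])
    fix x assume "x \<in> {x. x \<bullet> (H *v x) < r}"
    then show "\<bar>r - x \<bullet> (H *v x)\<bar> \<le> r" using Q_nonneg[of x] by (simp add: abs_le_iff)
  qed
  moreover have "gg r = (\<lambda>x. if x \<in> {x. x \<bullet> (H *v x) < r} then r - x \<bullet> (H *v x) else 0)"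
    by (simp add: gg_def fun_eq_iff)
  ultimately show ?thesis using integrable_restrict_UNIV[of "{x. x \<bullet> (H *v x) < r}" "\<lambda>x. r - x \<bullet> (H *v x)"]
    by (simp only:)
qed

lemma E_bounded: "bounded {x. x \<bullet> (H *v x) < r}"
proof -
  obtain lam where lam: "lam > 0" "\<And>x. lam * (norm x)\<^sup>2 \<le> x \<bullet> (H *v x)" using quad_lower[OF pd] by blast
  have "norm x \<le> sqrt (\<bar>r\<bar> / lam)" if "x \<bullet> (H *v x) < r" for x
  proof -
    have "lam * (norm x)\<^sup>2 \<le> \<bar>r\<bar>" using lam(2)[of x] that by linarith
    then have "(norm x)\<^sup>2 \<le> \<bar>r\<bar> / lam" using lam(1) by (simp add: field_simps)
    then show ?thesis by (simp add: real_le_rsqrt)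
  qed
  then show ?thesis unfolding bounded_iff by blast
qed

lemma gg_scale:
  assumes r: "r > 0"
  shows "integral UNIV (gg r) = sqrt r ^ (CARD('n) + 2) * integral UNIV (gg 1)"
proof -
  define m where "m = 1 / sqrt r"
  have m: "m > 0" "m \<noteq> 0" using r by (auto simp: m_def)
  have Qm: "(m *\<^sub>R x) \<bullet> (H *v (m *\<^sub>R x)) = x \<bullet> (H *v x) / r" for x
    unfolding quad_scale using r by (simp add: m_def power_divide)
  have ggr: "gg r x = r * gg 1 (m *\<^sub>R x)" for x
    unfolding gg_def Qm using r by (auto simp: field_simps)
  obtain a where a: "{x. x \<bullet> (H *v x) < 1} \<subseteq> cbox (-a) a"
    using E_bounded[of 1] bounded_subset_cbox_symmetric by blast
  have int1: "gg 1 integrable_on UNIV" by (rule gg_int) simp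
  have z: "gg 1 x = 0" if "x \<notin> cbox (-a) a" for x
    using a that by (auto simp: gg_def)
  have ic: "gg 1 integrable_on cbox (-a) a" by (rule integrable_on_subcbox[OF int1]) simp
  have "(gg 1 has_integral integral (cbox (-a) a) (gg 1)) UNIV"
    by (rule has_integral_on_superset[OF integrable_integral[OF ic] z]) auto
  then have eq1: "integral (cbox (-a) a) (gg 1) = integral UNIV (gg 1)" by (simp add: integral_unique)
  have "((\<lambda>x. gg 1 (m *\<^sub>R x + 0)) has_integral (1 / \<bar>m\<bar> ^ DIM(real^'n)) *\<^sub>R integral UNIV (gg 1))
        ((\<lambda>x. (1 / m) *\<^sub>R x + - ((1 / m) *\<^sub>R 0)) ` cbox (-a) a)"
    using has_integral_affinity[OF integrable_integral[OF ic] m(2), of 0] eq1 by simp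
  then have h2: "((\<lambda>x. gg 1 (m *\<^sub>R x)) has_integral (sqrt r ^ CARD('n)) * integral UNIV (gg 1))
        ((\<lambda>x. (1 / m) *\<^sub>R x) ` cbox (-a) a)"
    using m by (simp add: m_def power_one_over)
  have "((\<lambda>x. gg 1 (m *\<^sub>R x)) has_integral (sqrt r ^ CARD('n)) * integral UNIV (gg 1)) UNIV"
  proof (rule has_integral_on_superset[OF h2])
    fix x assume "x \<notin> (\<lambda>x. (1 / m) *\<^sub>R x) ` cbox (-a) a"
    moreover have "x = (1 / m) *\<^sub>R (m *\<^sub>R x)" using m by simp
    ultimately have "m *\<^sub>R x \<notin> cbox (-a) a" by (metis (no_types, lifting) image_eqI)
    then show "gg 1 (m *\<^sub>R x) = 0" by (rule z)
  qed auto
  then have "((\<lambda>x. r * gg 1 (m *\<^sub>R x)) has_integral r * ((sqrt r ^ CARD('n)) * integral UNIV (gg 1))) UNIV"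
    by (rule has_integral_mult_right)
  then have "(gg r has_integral r * ((sqrt r ^ CARD('n)) * integral UNIV (gg 1))) UNIV"
    unfolding ggr[abs_def] .
  then have "integral UNIV (gg r) = r * ((sqrt r ^ CARD('n)) * integral UNIV (gg 1))" by (rule integral_unique)
  also have "\<dots> = sqrt r ^ (CARD('n) + 2) * integral UNIV (gg 1)"
    using r by (simp add: power_add)
  finally show ?thesis .
qed

lemma gg_incr:
  assumes h: "h > 0"
  shows "h * (sqrt 1 ^ CARD('n) * Cst) \<le> integral UNIV (gg (1 + h)) - integral UNIV (gg 1)"
    and "integral UNIV (gg (1 + h)) - integral UNIV (gg 1) \<le> h * (sqrt (1 + h) ^ CARD('n) * Cst)"
proof -
  have i1: "gg 1 integrable_on UNIV" "gg (1 + h) integrable_on UNIV" using h by (auto intro: gg_int)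
  have d: "integral UNIV (gg (1 + h)) - integral UNIV (gg 1) = integral UNIV (\<lambda>x. gg (1 + h) x - gg 1 x)"
    by (rule integral_diff[OF i1(2) i1(1), symmetric])
  have id: "(\<lambda>x. gg (1 + h) x - gg 1 x) integrable_on UNIV" by (rule integrable_diff[OF i1(2) i1(1)])
  have ind: "h * (sqrt s ^ CARD('n) * Cst) = integral UNIV (\<lambda>x. h * indicator {x. x \<bullet> (H *v x) < s} x)"
     and indi: "(\<lambda>x. h * indicator {x. x \<bullet> (H *v x) < s} x) integrable_on UNIV" if "s \<ge> 0" for s
  proof -
    have L: "{x. x \<bullet> (H *v x) < s} \<in> lmeasurable" by (rule E_meas[OF that])
    show "h * (sqrt s ^ CARD('n) * Cst) = integral UNIV (\<lambda>x. h * indicator {x. x \<bullet> (H *v x) < s} x)"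
      using E_measure[OF that] lmeasure_integral_UNIV[OF L] by simp
    show "(\<lambda>x. h * indicator {x. x \<bullet> (H *v x) < s} x) integrable_on UNIV"
      using L by (intro integrable_on_mult_right) (simp add: measurable_integrable)
  qed
  show "h * (sqrt 1 ^ CARD('n) * Cst) \<le> integral UNIV (gg (1 + h)) - integral UNIV (gg 1)"
    unfolding d ind[of 1, OF zero_le_one]
    by (rule integral_le[OF indi[of 1, OF zero_le_one] id]) (use h in \<open>auto simp: gg_def indicator_def\<close>)
  show "integral UNIV (gg (1 + h)) - integral UNIV (gg 1) \<le> h * (sqrt (1 + h) ^ CARD('n) * Cst)"
    unfolding d ind[of "1 + h", OF less_imp_le[OF add_pos_pos[OF zero_less_one h]]]
    by (rule integral_le[OF id indi[of "1 + h", OF less_imp_le[OF add_pos_pos[OF zero_less_one h]]]])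
      (use h in \<open>auto simp: gg_def indicator_def\<close>)
qed

lemma gg_one: "integral UNIV (gg 1) = 2 * Cst / (CARD('n) + 2)"
proof -
  define n where "n = CARD('n)"
  define G1 where "G1 = integral UNIV (gg 1)"
  define \<phi> where "\<phi> h = sqrt (1 + h) ^ (n + 2)" for h :: real
  have D: "(\<phi> has_real_derivative (real n + 2) / 2) (at 0)"
  proof -
    have d1: "((\<lambda>h. 1 + h) has_real_derivative 1) (at (0::real))" by (auto intro!: derivative_eq_intros)
    have d2: "(sqrt has_real_derivative inverse (sqrt (1 + 0)) / 2) (at (1 + 0))" by (rule DERIV_real_sqrt) simp
    have d3: "((\<lambda>h. sqrt (1 + h)) has_real_derivative inverse (sqrt (1 + 0)) / 2 * 1) (at 0)"
      by (rule DERIV_chain2[OF d2 d1])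
    have "((\<lambda>h. sqrt (1 + h) ^ (n + 2)) has_real_derivative of_nat (n + 2) * ((inverse (sqrt (1 + 0)) / 2 * 1) * sqrt (1 + 0) ^ (n + 2 - Suc 0))) (at 0)"
      by (rule DERIV_power[OF d3])
    moreover have "of_nat (n + 2) * ((inverse (sqrt (1 + 0)) / 2 * 1) * sqrt (1 + 0) ^ (n + 2 - Suc 0)) = (real n + 2) / (2::real)"
      by simp
    ultimately show ?thesis unfolding \<phi>_def[abs_def] by (simp add: add.commute)
  qed
  then have lim0: "((\<lambda>h. (\<phi> (0 + h) - \<phi> 0) / h) \<longlongrightarrow> (real n + 2) / 2) (at 0)"
    by (simp add: DERIV_def)
  have lim1: "((\<lambda>h. (\<phi> h - 1) / h * G1) \<longlongrightarrow> (real n + 2) / 2 * G1) (at_right 0)"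
    using tendsto_mono[OF at_le[OF subset_UNIV] lim0] by (intro tendsto_mult tendsto_const) (simp add: \<phi>_def)
  have lim2: "((\<lambda>h. sqrt (1 + h) ^ n * Cst) \<longlongrightarrow> sqrt (1 + 0) ^ n * Cst) (at_right 0)"
    by (intro tendsto_mult_right tendsto_power tendsto_real_sqrt tendsto_add tendsto_const tendsto_ident_at)
  have ev: "\<forall>\<^sub>F h in at_right 0. Cst \<le> (\<phi> h - 1) / h * G1 \<and> (\<phi> h - 1) / h * G1 \<le> sqrt (1 + h) ^ n * Cst"
    unfolding eventually_at_right_less
  proof (rule eventually_at_right_less[THEN eventually_mono], intro conjI)
    fix h :: real assume h: "h > 0"
    have e: "integral UNIV (gg (1 + h)) = \<phi> h * G1" using gg_scale[of "1 + h"] h by (simp add: \<phi>_def G1_def n_def)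
    have a: "h * Cst \<le> (\<phi> h - 1) * G1" using gg_incr(1)[OF h] e by (simp add: G1_def algebra_simps)
    have b: "(\<phi> h - 1) * G1 \<le> h * (sqrt (1 + h) ^ n * Cst)" using gg_incr(2)[OF h] e by (simp add: G1_def n_def algebra_simps)
    show "Cst \<le> (\<phi> h - 1) / h * G1" using a h by (simp add: field_simps)
    show "(\<phi> h - 1) / h * G1 \<le> sqrt (1 + h) ^ n * Cst" using b h by (simp add: field_simps)
  qed
  have "Cst \<le> (real n + 2) / 2 * G1"
    by (rule tendsto_le[OF trivial_limit_at_right_real lim1 tendsto_const]) (use ev in \<open>auto elim: eventually_mono\<close>)
  moreover have "(real n + 2) / 2 * G1 \<le> sqrt (1 + 0) ^ n * Cst"
    by (rule tendsto_le[OF trivial_limit_at_right_real lim2 lim1]) (use ev in \<open>auto elim: eventually_mono\<close>)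
  ultimately have "(real n + 2) / 2 * G1 = Cst" by simp
  then show ?thesis by (simp add: G1_def n_def field_simps)
qed

end

lemma localize:
  fixes f :: "real^'n::finite \<Rightarrow> real" and H :: "real^'n^'n"
  assumes U: "open U" "convex U" "0 \<in> U" and fc: "convex_on U f" and fn: "\<And>x. x \<in> U \<Longrightarrow> f x \<ge> 0"
    and f0: "f 0 = 0"
    and exp: "\<And>\<epsilon>. \<epsilon> > 0 \<Longrightarrow> \<exists>\<delta>>0. \<forall>h. norm h < \<delta> \<longrightarrow> \<bar>f h - (h \<bullet> (H *v h)) / 2\<bar> \<le> \<epsilon> * (norm h)\<^sup>2"
    and lam: "lam > 0" "\<And>x. lam * (norm x)\<^sup>2 \<le> x \<bullet> (H *v x)"
    and eta: "0 < \<eta>" "\<eta> < 1" and rho: "\<rho> > 0"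
  shows "\<exists>t0>0. \<forall>t. 0 < t \<and> t < t0 \<longrightarrow>
     (\<forall>x. x \<bullet> (H *v x) < 2 * t / (1 + \<eta>) \<longrightarrow> x \<in> U \<and> f x < t \<and> f x \<le> (1 + \<eta>) * (x \<bullet> (H *v x)) / 2) \<and>
     (\<forall>x\<in>U. f x < t \<longrightarrow> norm x < \<rho> \<and> (1 - \<eta>) * (x \<bullet> (H *v x)) / 2 \<le> f x \<and> x \<bullet> (H *v x) < 2 * t / (1 - \<eta>))"
proof -
  obtain d1 where d1: "d1 > 0" "ball 0 d1 \<subseteq> U" using U open_contains_ball by blast
  obtain \<delta> where \<delta>: "\<delta> > 0" "\<And>h. norm h < \<delta> \<Longrightarrow> \<bar>f h - (h \<bullet> (H *v h)) / 2\<bar> \<le> (\<eta> * lam / 2) * (norm h)\<^sup>2"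
    using exp[of "\<eta> * lam / 2"] eta lam by auto
  define \<delta>' where "\<delta>' = min \<delta> (min \<rho> d1)"
  have \<delta>': "\<delta>' > 0" "\<delta>' \<le> \<delta>" "\<delta>' \<le> \<rho>" "\<delta>' \<le> d1" using \<delta> rho d1 by (auto simp: \<delta>'_def)
  have sand: "(1 - \<eta>) * (h \<bullet> (H *v h)) / 2 \<le> f h \<and> f h \<le> (1 + \<eta>) * (h \<bullet> (H *v h)) / 2" if "norm h < \<delta>" for h
  proof -
    have "\<eta> * lam / 2 * (norm h)\<^sup>2 \<le> \<eta> / 2 * (h \<bullet> (H *v h))"
      using lam(2)[of h] eta by (simp add: mult_left_mono)
    then have a: "\<bar>f h - (h \<bullet> (H *v h)) / 2\<bar> \<le> \<eta> / 2 * (h \<bullet> (H *v h))" using \<delta>(2)[OF that] by linarith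
    have e1: "(1 - \<eta>) * (h \<bullet> (H *v h)) / 2 = (h \<bullet> (H *v h)) / 2 - \<eta> / 2 * (h \<bullet> (H *v h))" by (simp add: field_simps)
    have e2: "(1 + \<eta>) * (h \<bullet> (H *v h)) / 2 = (h \<bullet> (H *v h)) / 2 + \<eta> / 2 * (h \<bullet> (H *v h))" by (simp add: field_simps)
    show ?thesis unfolding e1 e2 using a by (auto simp only: abs_le_iff)
  qed
  define t0 where "t0 = (1 - \<eta>) * lam * \<delta>'\<^sup>2 / 8"
  have t0: "t0 > 0" using eta lam \<delta>' by (simp add: t0_def)
  show ?thesis
  proof (intro exI[of _ t0] conjI allI impI ballI t0)
    fix t x assume t: "0 < t \<and> t < t0"
    {
      assume xq: "x \<bullet> (H *v x) < 2 * t / (1 + \<eta>)"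
      have "2 * t / (1 + \<eta>) \<le> 2 * t" using t eta by (simp add: divide_le_eq)
      then have "lam * (norm x)\<^sup>2 < 2 * t0" using lam(2)[of x] xq t by linarith
      also have "\<dots> \<le> lam * \<delta>'\<^sup>2 / 4" using eta lam \<delta>' by (simp add: t0_def field_simps)
      finally have "(norm x)\<^sup>2 < \<delta>'\<^sup>2 / 4" using lam by (simp add: field_simps)
      moreover have "\<delta>'\<^sup>2 / 4 < \<delta>'\<^sup>2" using \<delta>' by simp
      ultimately have "(norm x)\<^sup>2 < \<delta>'\<^sup>2" by linarith
      then have nx: "norm x < \<delta>'" using power_less_imp_less_base[of "norm x" 2 \<delta>'] \<delta>' by simp
      then show "x \<in> U" using d1 \<delta>' by auto
      have fle: "f x \<le> (1 + \<eta>) * (x \<bullet> (H *v x)) / 2" using sand[of x] nx \<delta>' by auto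
      then show "f x \<le> (1 + \<eta>) * (x \<bullet> (H *v x)) / 2" .
      have "(1 + \<eta>) * (x \<bullet> (H *v x)) / 2 < t" using xq eta by (simp add: field_simps)
      then show "f x < t" using fle by linarith
    }
    assume xU: "x \<in> U" and fx: "f x < t"
    have nx: "norm x < \<delta>'"
    proof (rule ccontr)
      assume "\<not> norm x < \<delta>'"
      then have nx: "norm x \<ge> \<delta>'" by simp
      then have nxp: "norm x > 0" using \<delta>' by linarith
      define \<theta> where "\<theta> = \<delta>' / (2 * norm x)"
      have th: "0 \<le> \<theta>" "\<theta> \<le> 1" using nx nxp \<delta>' by (auto simp: \<theta>_def field_simps)
      define y where "y = \<theta> *\<^sub>R x"
      have yeq: "y = (1 - \<theta>) *\<^sub>R 0 + \<theta> *\<^sub>R x" by (simp add: y_def)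
      have yU: "y \<in> U" unfolding yeq using U(2) U(3) xU th by (rule convexD_alt)
      have "f y \<le> (1 - \<theta>) * f 0 + \<theta> * f x" unfolding yeq by (rule convex_onD[OF fc th U(3) xU])
      also have "\<dots> = \<theta> * f x" by (simp add: f0)
      also have "\<dots> \<le> f x" using th fn[OF xU] by (simp add: mult_left_le_one_le)
      finally have fy: "f y < t" using fx by linarith
      have ny: "norm y = \<delta>' / 2" using nxp \<delta>' th by (simp add: y_def \<theta>_def)
      then have "norm y < \<delta>" using \<delta>' by simp
      then have "(1 - \<eta>) * (y \<bullet> (H *v y)) / 2 \<le> f y" using sand by blast
      moreover have "(1 - \<eta>) * (lam * (norm y)\<^sup>2) / 2 \<le> (1 - \<eta>) * (y \<bullet> (H *v y)) / 2"
        using lam(2)[of y] eta by (simp add: mult_left_mono)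
      moreover have "(1 - \<eta>) * (lam * (norm y)\<^sup>2) / 2 = t0" unfolding ny t0_def by (simp add: power_divide)
      ultimately show False using fy t by linarith
    qed
    then show "norm x < \<rho>" using \<delta>' by linarith
    have lo: "(1 - \<eta>) * (x \<bullet> (H *v x)) / 2 \<le> f x" using sand[of x] nx \<delta>' by auto
    then show "(1 - \<eta>) * (x \<bullet> (H *v x)) / 2 \<le> f x" .
    show "x \<bullet> (H *v x) < 2 * t / (1 - \<eta>)" using lo fx eta by (simp add: field_simps)
  qed
qed

lemma squeeze_param:
  fixes F lo hi :: "real \<Rightarrow> real"
  assumes ev: "\<And>\<eta>. 0 < \<eta> \<Longrightarrow> \<eta> < 1 \<Longrightarrow> eventually (\<lambda>t. lo \<eta> \<le> F t \<and> F t \<le> hi \<eta>) (at_right 0)"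
    and lo: "(lo \<longlongrightarrow> L) (at_right 0)" and hi: "(hi \<longlongrightarrow> L) (at_right 0)"
  shows "(F \<longlongrightarrow> L) (at_right 0)"
proof (rule tendstoI)
  fix e :: real assume e: "e > 0"
  have "eventually (\<lambda>\<eta>. dist (lo \<eta>) L < e \<and> dist (hi \<eta>) L < e \<and> \<eta> < 1) (at_right 0)"
  proof (intro eventually_conj)
    show "eventually (\<lambda>\<eta>. dist (lo \<eta>) L < e) (at_right 0)" by (rule tendstoD[OF lo e])
    show "eventually (\<lambda>\<eta>. dist (hi \<eta>) L < e) (at_right 0)" by (rule tendstoD[OF hi e])
    show "eventually (\<lambda>\<eta>::real. \<eta> < 1) (at_right 0)"
      unfolding eventually_at_right_field by (intro exI[of _ 1]) auto
  qed
  then obtain b where b: "b > 0" "\<And>\<eta>. 0 < \<eta> \<Longrightarrow> \<eta> < b \<Longrightarrow> dist (lo \<eta>) L < e \<and> dist (hi \<eta>) L < e \<and> \<eta> < 1"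
    by (auto simp: eventually_at_right_field)
  define \<eta> where "\<eta> = b / 2"
  have "dist (lo \<eta>) L < e \<and> dist (hi \<eta>) L < e \<and> \<eta> < 1" using b by (intro b(2)) (auto simp: \<eta>_def)
  moreover have "\<eta> > 0" using b by (simp add: \<eta>_def)
  ultimately have "eventually (\<lambda>t. lo \<eta> \<le> F t \<and> F t \<le> hi \<eta>) (at_right 0)" using ev by blast
  then show "eventually (\<lambda>t. dist (F t) L < e) (at_right 0)"
    by (rule eventually_mono) (use \<open>dist (lo \<eta>) L < e \<and> dist (hi \<eta>) L < e \<and> \<eta> < 1\<close> in \<open>auto simp: dist_real_def\<close>)
qed

context ell begin

lemma sqrt_scale: "c > 0 \<Longrightarrow> t > 0 \<Longrightarrow> sqrt (2 * t / c) ^ k / sqrt t ^ k = sqrt (2 / c) ^ k"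
  by (simp add: real_sqrt_mult real_sqrt_divide power_mult_distrib power_divide)

lemma A_bounds:
  assumes sub1: "{x. x \<bullet> (H *v x) < 2 * t / (1 + \<eta>)} \<subseteq> S" and sub2: "S \<subseteq> {x. x \<bullet> (H *v x) < 2 * t / (1 - \<eta>)}"
    and S: "S \<in> sets lebesgue" and eta: "0 < \<eta>" "\<eta> < 1" and t: "t > 0"
  shows "sqrt (2 / (1 + \<eta>)) ^ CARD('n) * Cst \<le> measure lebesgue S / sqrt t ^ CARD('n)"
    and "measure lebesgue S / sqrt t ^ CARD('n) \<le> sqrt (2 / (1 - \<eta>)) ^ CARD('n) * Cst"
proof -
  have p1: "2 * t / (1 + \<eta>) \<ge> 0" "2 * t / (1 - \<eta>) \<ge> 0" using eta t by auto
  have st: "sqrt t ^ CARD('n) > 0" using t by simp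
  have Slm: "S \<in> lmeasurable" by (rule fmeasurableI2[OF E_meas[OF p1(2)] sub2 S])
  have "measure lebesgue {x. x \<bullet> (H *v x) < 2 * t / (1 + \<eta>)} \<le> measure lebesgue S"
    by (rule measure_mono_fmeasurable[OF sub1 fmeasurableD[OF E_meas[OF p1(1)]] Slm])
  then have "sqrt (2 * t / (1 + \<eta>)) ^ CARD('n) * Cst / sqrt t ^ CARD('n) \<le> measure lebesgue S / sqrt t ^ CARD('n)"
    unfolding E_measure[OF p1(1)] using st by (simp add: divide_right_mono)
  then show "sqrt (2 / (1 + \<eta>)) ^ CARD('n) * Cst \<le> measure lebesgue S / sqrt t ^ CARD('n)"
    using sqrt_scale[of "1 + \<eta>" t "CARD('n)"] eta t by (simp add: field_simps)
  have "measure lebesgue S \<le> measure lebesgue {x. x \<bullet> (H *v x) < 2 * t / (1 - \<eta>)}"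
    by (rule measure_mono_fmeasurable[OF sub2 S E_meas[OF p1(2)]])
  then have "measure lebesgue S / sqrt t ^ CARD('n) \<le> sqrt (2 * t / (1 - \<eta>)) ^ CARD('n) * Cst / sqrt t ^ CARD('n)"
    unfolding E_measure[OF p1(2)] using st by (simp add: divide_right_mono)
  then show "measure lebesgue S / sqrt t ^ CARD('n) \<le> sqrt (2 / (1 - \<eta>)) ^ CARD('n) * Cst"
    using sqrt_scale[of "1 - \<eta>" t "CARD('n)"] eta t by (simp add: field_simps)
qed

lemma resc: "(x::real) * (a * g) / s = x * (a / s) * g"
  by (cases "s = 0") (simp_all add: field_simps)

lemma gg_nonneg: "gg r x \<ge> 0" by (simp add: gg_def)

lemma V_bounds:
  fixes g :: "real^'n \<Rightarrow> real"
  assumes in1: "\<And>x. x \<bullet> (H *v x) < 2 * t / (1 + \<eta>) \<Longrightarrow> x \<in> S \<and> g x \<le> (1 + \<eta>) * (x \<bullet> (H *v x)) / 2"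
    and in2: "\<And>x. x \<in> S \<Longrightarrow> g x < t \<and> (1 - \<eta>) * (x \<bullet> (H *v x)) / 2 \<le> g x \<and> x \<bullet> (H *v x) < 2 * t / (1 - \<eta>)"
    and gnn: "\<And>x. x \<in> S \<Longrightarrow> g x \<ge> 0" and gc: "continuous_on S g"
    and S: "S \<in> sets lebesgue" and eta: "0 < \<eta>" "\<eta> < 1" and t: "t > 0"
  shows "(1 + \<eta>) / 2 * sqrt (2 / (1 + \<eta>)) ^ (CARD('n) + 2) * integral UNIV (gg 1) \<le> integral S (\<lambda>x. t - g x) / sqrt t ^ (CARD('n) + 2)"
    and "integral S (\<lambda>x. t - g x) / sqrt t ^ (CARD('n) + 2) \<le> (1 - \<eta>) / 2 * sqrt (2 / (1 - \<eta>)) ^ (CARD('n) + 2) * integral UNIV (gg 1)"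
proof -
  have p1: "2 * t / (1 + \<eta>) > 0" "2 * t / (1 - \<eta>) > 0" using eta t by auto
  have st: "sqrt t ^ (CARD('n) + 2) > 0" using t by simp
  have e1: "1 - \<eta> > 0" using eta by simp
  have sub2: "S \<subseteq> {x. x \<bullet> (H *v x) < 2 * t / (1 - \<eta>)}" using in2 by auto
  have Slm: "S \<in> lmeasurable" by (rule fmeasurableI2[OF E_meas sub2 S]) (use p1 in auto)
  have intS: "(\<lambda>x. t - g x) integrable_on S"
    by (rule int_bdd_cont[OF continuous_on_diff[OF continuous_on_const gc] Slm, where C=t])
       (use gnn in2 in \<open>fastforce simp: abs_le_iff\<close>)
  define F where "F x = (if x \<in> S then t - g x else 0)" for x
  have FI: "F integrable_on UNIV" unfolding F_def using intS by (simp add: integrable_restrict_UNIV)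
  have Fint: "integral UNIV F = integral S (\<lambda>x. t - g x)" unfolding F_def by (rule integral_restrict_UNIV)
  define W where "W c x = c / 2 * gg (2 * t / c) x" for c x
  have WI: "W c integrable_on UNIV" if "c > 0" for c
    unfolding W_def[abs_def] by (rule integrable_on_mult_right, rule gg_int) (use that t in auto)
  have Wint: "integral UNIV (W c) = c / 2 * (sqrt (2 * t / c) ^ (CARD('n) + 2) * integral UNIV (gg 1))" if "c > 0" for c
    unfolding W_def[abs_def] integral_mult_right using gg_scale[of "2 * t / c"] that t by simp
  have "integral UNIV (W (1 + \<eta>)) \<le> integral UNIV F"
  proof (rule integral_le[OF WI FI])
    show "1 + \<eta> > 0" using eta by simp
    fix x :: "real^'n"
    show "W (1 + \<eta>) x \<le> F x"
    proof (cases "x \<bullet> (H *v x) < 2 * t / (1 + \<eta>)")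
      case True
      have e: "(1 + \<eta>) / 2 * (2 * t / (1 + \<eta>) - x \<bullet> (H *v x)) = t - (1 + \<eta>) * (x \<bullet> (H *v x)) / 2"
        using eta by (simp add: field_simps)
      have xS: "x \<in> S" using in1[OF True] by blast
      show ?thesis using in1[OF True] unfolding W_def F_def gg_def if_P[OF True] e if_P[OF xS] by linarith
    next
      case False
      then show ?thesis using in2 by (fastforce simp: W_def F_def gg_def)
    qed
  qed
  have "(1 + \<eta>) / 2 * (sqrt (2 * t / (1 + \<eta>)) ^ (CARD('n) + 2) * integral UNIV (gg 1)) / sqrt t ^ (CARD('n) + 2)
      \<le> integral S (\<lambda>x. t - g x) / sqrt t ^ (CARD('n) + 2)"
    using \<open>integral UNIV (W (1 + \<eta>)) \<le> integral UNIV F\<close>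
    unfolding Fint Wint[OF add_pos_pos[OF zero_less_one eta(1)]] by (rule divide_right_mono) (use st in simp)
  then show "(1 + \<eta>) / 2 * sqrt (2 / (1 + \<eta>)) ^ (CARD('n) + 2) * integral UNIV (gg 1) \<le> integral S (\<lambda>x. t - g x) / sqrt t ^ (CARD('n) + 2)"
    unfolding resc sqrt_scale[of "1 + \<eta>" t "CARD('n) + 2", OF add_pos_pos[OF zero_less_one eta(1)] t] .
  have "integral UNIV F \<le> integral UNIV (W (1 - \<eta>))"
  proof (rule integral_le[OF FI WI])
    show "1 - \<eta> > 0" using eta by simp
    fix x :: "real^'n"
    show "F x \<le> W (1 - \<eta>) x"
    proof (cases "x \<in> S")
      case True
      have e: "(1 - \<eta>) / 2 * (2 * t / (1 - \<eta>) - x \<bullet> (H *v x)) = t - (1 - \<eta>) * (x \<bullet> (H *v x)) / 2"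
        using eta by (simp add: field_simps)
      have q: "x \<bullet> (H *v x) < 2 * t / (1 - \<eta>)" using in2[OF True] by blast
      show ?thesis using in2[OF True] unfolding W_def F_def gg_def if_P[OF True] if_P[OF q] e by linarith
    next
      case False
      then show ?thesis using eta by (simp add: W_def F_def gg_nonneg)
    qed
  qed
  have "integral S (\<lambda>x. t - g x) / sqrt t ^ (CARD('n) + 2) \<le>
      (1 - \<eta>) / 2 * (sqrt (2 * t / (1 - \<eta>)) ^ (CARD('n) + 2) * integral UNIV (gg 1)) / sqrt t ^ (CARD('n) + 2)"
    using \<open>integral UNIV F \<le> integral UNIV (W (1 - \<eta>))\<close>
    unfolding Fint Wint[of "1 - \<eta>", OF e1] by (rule divide_right_mono) (use st in simp)
  then show "integral S (\<lambda>x. t - g x) / sqrt t ^ (CARD('n) + 2) \<le> (1 - \<eta>) / 2 * sqrt (2 / (1 - \<eta>)) ^ (CARD('n) + 2) * integral UNIV (gg 1)"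
    unfolding resc sqrt_scale[of "1 - \<eta>" t "CARD('n) + 2", OF e1 t] .
qed

end

lemma const_eq: "s > 0 \<Longrightarrow> (m::real) \<ge> 0 \<Longrightarrow> 1 / 2 * a * (2 * (w / s) / (m + 2)) = a * w / ((m + 2) * s)"
  by (simp add: field_simps)

theorem lemma8:
  fixes f :: "real^'n \<Rightarrow> real" and U :: "(real^'n) set"
  assumes U_open: "open U" and U_convex: "convex U" and U0: "0 \<in> U"
    and f_smooth: "smooth_on U f"
    and f_convex: "convex_on U f"
    and f_nonneg: "\<And>x. x \<in> U \<Longrightarrow> f x \<ge> 0"
    and f0: "f 0 = 0"
    and tangent: "grad f 0 = 0"
    and K_pos: "det (hessian f 0) > 0"
  defines "A \<equiv> (\<lambda>t. integral {x \<in> U. f x < t} (\<lambda>x. 1 :: real))"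
    and "V \<equiv> (\<lambda>t. integral {x \<in> U. f x < t} (\<lambda>x. t - f x))"
    and "S \<equiv> (\<lambda>t. integral {x \<in> U. f x < t} (\<lambda>x. sqrt (1 + (norm (grad f x))\<^sup>2)))"
    and "K \<equiv> det (hessian f 0)"
    and "\<omega> \<equiv> unit_ball_volume TYPE('n)"
    and "n \<equiv> CARD('n)"
  shows "((\<lambda>t. A t / sqrt t ^ n) \<longlongrightarrow> sqrt 2 ^ n * \<omega> / sqrt K) (at_right 0)
     \<and> ((\<lambda>t. V t / sqrt t ^ (n + 2)) \<longlongrightarrow> sqrt 2 ^ (n + 2) * \<omega> / (real (n + 2) * sqrt K)) (at_right 0)
     \<and> ((\<lambda>t. S t / sqrt t ^ n) \<longlongrightarrow> sqrt 2 ^ n * \<omega> / sqrt K) (at_right 0)"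
proof -
  define H where "H = hessian f 0"
  have sym: "\<And>i j. H$i$j = H$j$i" unfolding H_def by (rule hessian_sym[OF U_open U0 f_smooth])
  have exp: "\<And>\<epsilon>. \<epsilon> > 0 \<Longrightarrow> \<exists>\<delta>>0. \<forall>h. norm h < \<delta> \<longrightarrow> \<bar>f h - (h \<bullet> (H *v h)) / 2\<bar> \<le> \<epsilon> * (norm h)\<^sup>2"
    unfolding H_def by (rule expansion[OF U_open U0 f_smooth f0 tangent])
  obtain d1 where d1: "d1 > 0" "ball 0 d1 \<subseteq> U" using U_open U0 open_contains_ball by blast
  have nn: "\<And>x. x \<bullet> (H *v x) \<ge> 0"
    by (rule quad_nonneg[OF exp d1(1)]) (use d1 f_nonneg in auto)
  have pd: "\<And>x. x \<noteq> 0 \<Longrightarrow> x \<bullet> (H *v x) > 0"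
    using quad_pd[OF sym nn] K_pos unfolding H_def by auto
  obtain lam where lam: "lam > 0" "\<And>x. lam * (norm x)\<^sup>2 \<le> x \<bullet> (H *v x)" using quad_lower[OF pd] by blast
  obtain T where T: "\<And>x. (T *v x) \<bullet> (H *v (T *v x)) = (norm x)\<^sup>2" "(det T)\<^sup>2 * det H = 1"
    using congruence[OF sym pd] by blast
  interpret E: ell H T using T pd by unfold_locales auto
  have KH: "K = det H" by (simp add: K_def H_def)
  have Cst: "E.Cst = \<omega> / sqrt K" unfolding E.Cst_def \<omega>_def unit_ball_volume_def KH ..
  have G1: "integral UNIV (E.gg 1) = 2 * E.Cst / (real n + 2)" using E.gg_one by (simp add: n_def)
  have fcont: "continuous_on U f"
  proof -
    have "\<And>x. x \<in> U \<Longrightarrow> isCont (dpart [] f) x" by (rule smooth_cont[OF f_smooth U_open])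
    then show ?thesis by (simp add: continuous_at_imp_continuous_on)
  qed
  have Sub_open: "open {x \<in> U. f x < t}" for t
  proof -
    have "{x \<in> U. f x < t} = U \<inter> f -` {..<t}" by auto
    then show ?thesis using continuous_open_preimage[OF fcont U_open open_lessThan] by simp
  qed
  have loc: "\<exists>t0>0. \<forall>t. 0 < t \<and> t < t0 \<longrightarrow>
     (\<forall>x. x \<bullet> (H *v x) < 2 * t / (1 + \<eta>) \<longrightarrow> x \<in> U \<and> f x < t \<and> f x \<le> (1 + \<eta>) * (x \<bullet> (H *v x)) / 2) \<and>
     (\<forall>x\<in>U. f x < t \<longrightarrow> norm x < \<rho> \<and> (1 - \<eta>) * (x \<bullet> (H *v x)) / 2 \<le> f x \<and> x \<bullet> (H *v x) < 2 * t / (1 - \<eta>))"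
    if "0 < \<eta>" "\<eta> < 1" "\<rho> > 0" for \<eta> \<rho>
    by (rule localize[OF U_open U_convex U0 f_convex f_nonneg f0 exp lam that])
  have Sub_lm: "{x \<in> U. f x < t} \<in> lmeasurable"
    if "\<forall>x\<in>U. f x < t \<longrightarrow> norm x < \<rho> \<and> (1 - \<eta>) * (x \<bullet> (H *v x)) / 2 \<le> f x \<and> x \<bullet> (H *v x) < 2 * t / (1 - \<eta>)" for t \<rho> \<eta>
  proof (rule lmeasurable_open[OF _ Sub_open])
    have "{x \<in> U. f x < t} \<subseteq> ball 0 \<rho>" using that by auto
    then show "bounded {x \<in> U. f x < t}" using bounded_subset by blast
  qed
  (* area *)
  have A_ev: "eventually (\<lambda>t. sqrt (2 / (1 + \<eta>)) ^ n * E.Cst \<le> A t / sqrt t ^ n \<and> A t / sqrt t ^ n \<le> sqrt (2 / (1 - \<eta>)) ^ n * E.Cst) (at_right 0)"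
    if eta: "0 < \<eta>" "\<eta> < 1" for \<eta>
  proof -
    obtain t0 where t0: "t0 > 0" "\<And>t. 0 < t \<and> t < t0 \<Longrightarrow>
     (\<forall>x. x \<bullet> (H *v x) < 2 * t / (1 + \<eta>) \<longrightarrow> x \<in> U \<and> f x < t \<and> f x \<le> (1 + \<eta>) * (x \<bullet> (H *v x)) / 2) \<and>
     (\<forall>x\<in>U. f x < t \<longrightarrow> norm x < 1 \<and> (1 - \<eta>) * (x \<bullet> (H *v x)) / 2 \<le> f x \<and> x \<bullet> (H *v x) < 2 * t / (1 - \<eta>))"
      using loc[OF eta zero_less_one] by blast
    show ?thesis unfolding eventually_at_right_field
    proof (intro exI[of _ t0] conjI allI impI t0(1))
      fix t :: real assume t: "t > 0" "t < t0"
      note L = t0(2)[OF conjI[OF t]]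
      have lm: "{x \<in> U. f x < t} \<in> lmeasurable" using Sub_lm L by blast
      have Aeq: "A t = measure lebesgue {x \<in> U. f x < t}" unfolding A_def by (rule lmeasure_integral[OF lm, symmetric])
      have s1: "{x. x \<bullet> (H *v x) < 2 * t / (1 + \<eta>)} \<subseteq> {x \<in> U. f x < t}" using L by auto
      have s2: "{x \<in> U. f x < t} \<subseteq> {x. x \<bullet> (H *v x) < 2 * t / (1 - \<eta>)}" using L by auto
      show "sqrt (2 / (1 + \<eta>)) ^ n * E.Cst \<le> A t / sqrt t ^ n"
        unfolding Aeq n_def by (rule E.A_bounds(1)[OF s1 s2 fmeasurableD[OF lm] eta t(1)])
      show "A t / sqrt t ^ n \<le> sqrt (2 / (1 - \<eta>)) ^ n * E.Cst"
        unfolding Aeq n_def by (rule E.A_bounds(2)[OF s1 s2 fmeasurableD[OF lm] eta t(1)])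
    qed
  qed
  (* volume *)
  define G where "G = integral UNIV (E.gg 1)"
  have V_ev: "eventually (\<lambda>t. (1 + \<eta>) / 2 * sqrt (2 / (1 + \<eta>)) ^ (n + 2) * G \<le> V t / sqrt t ^ (n + 2)
       \<and> V t / sqrt t ^ (n + 2) \<le> (1 - \<eta>) / 2 * sqrt (2 / (1 - \<eta>)) ^ (n + 2) * G) (at_right 0)"
    if eta: "0 < \<eta>" "\<eta> < 1" for \<eta>
  proof -
    obtain t0 where t0: "t0 > 0" "\<And>t. 0 < t \<and> t < t0 \<Longrightarrow>
     (\<forall>x. x \<bullet> (H *v x) < 2 * t / (1 + \<eta>) \<longrightarrow> x \<in> U \<and> f x < t \<and> f x \<le> (1 + \<eta>) * (x \<bullet> (H *v x)) / 2) \<and>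
     (\<forall>x\<in>U. f x < t \<longrightarrow> norm x < 1 \<and> (1 - \<eta>) * (x \<bullet> (H *v x)) / 2 \<le> f x \<and> x \<bullet> (H *v x) < 2 * t / (1 - \<eta>))"
      using loc[OF eta zero_less_one] by blast
    show ?thesis unfolding eventually_at_right_field
    proof (intro exI[of _ t0] conjI allI impI t0(1))
      fix t :: real assume t: "t > 0" "t < t0"
      note L = t0(2)[OF conjI[OF t]]
      have lm: "{x \<in> U. f x < t} \<in> lmeasurable" using Sub_lm L by blast
      have in1: "\<And>x. x \<bullet> (H *v x) < 2 * t / (1 + \<eta>) \<Longrightarrow> x \<in> {x \<in> U. f x < t} \<and> f x \<le> (1 + \<eta>) * (x \<bullet> (H *v x)) / 2"
        using L by blast
      have in2: "\<And>x. x \<in> {x \<in> U. f x < t} \<Longrightarrow> f x < t \<and> (1 - \<eta>) * (x \<bullet> (H *v x)) / 2 \<le> f x \<and> x \<bullet> (H *v x) < 2 * t / (1 - \<eta>)"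
        using L by blast
      have gnn: "\<And>x. x \<in> {x \<in> U. f x < t} \<Longrightarrow> f x \<ge> 0" using f_nonneg by blast
      have gc: "continuous_on {x \<in> U. f x < t} f" by (rule continuous_on_subset[OF fcont]) auto
      note VB = E.V_bounds[OF in1 in2 gnn gc fmeasurableD[OF lm] eta t(1)]
      show "(1 + \<eta>) / 2 * sqrt (2 / (1 + \<eta>)) ^ (n + 2) * G \<le> V t / sqrt t ^ (n + 2)"
        using VB(1) by (simp add: V_def G_def n_def)
      show "V t / sqrt t ^ (n + 2) \<le> (1 - \<eta>) / 2 * sqrt (2 / (1 - \<eta>)) ^ (n + 2) * G"
        using VB(2) by (simp add: V_def G_def n_def)
    qed
  qed
  (* surface *)
  have gradc: "continuous_on U (grad f)"
  proof -
    have "grad f = (\<lambda>x. \<chi> i. dpart [i] f x)" by (simp add: grad_def[abs_def])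
    moreover have "continuous_on U (\<lambda>x. \<chi> i. dpart [i] f x)"
    proof (rule continuous_on_vec_lambda)
      fix i show "continuous_on U (dpart [i] f)" using f_smooth unfolding smooth_on_def by blast
    qed
    ultimately show ?thesis by simp
  qed
  have hc: "continuous_on U (\<lambda>x. sqrt (1 + (norm (grad f x))\<^sup>2))"
    by (intro continuous_intros gradc)
  have grad0: "\<And>i. dpart [i] f 0 = 0" using tangent unfolding grad_def by (metis vec_lambda_beta zero_index)
  have S_ev: "eventually (\<lambda>t. sqrt (2 / (1 + \<eta>)) ^ n * E.Cst \<le> S t / sqrt t ^ n
       \<and> S t / sqrt t ^ n \<le> (1 + \<eta>) * (sqrt (2 / (1 - \<eta>)) ^ n * E.Cst)) (at_right 0)"
    if eta: "0 < \<eta>" "\<eta> < 1" for \<eta>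
  proof -
    have e: "\<eta> / CARD('n) > 0" using eta by simp
    obtain \<rho> where \<rho>: "\<rho> > 0" "\<And>i y. norm y < \<rho> \<Longrightarrow> \<bar>dpart [i] f y - dpart [i] f 0\<bar> < \<eta> / CARD('n)"
      using cont_choice[of "\<lambda>i. dpart [i] f", OF _ e] smooth_cont[OF f_smooth U_open U0] by blast
    have hb: "1 \<le> sqrt (1 + (norm (grad f y))\<^sup>2) \<and> sqrt (1 + (norm (grad f y))\<^sup>2) \<le> 1 + \<eta>" if y: "norm y < \<rho>" for y
    proof -
      have "norm (grad f y) \<le> (\<Sum>i\<in>UNIV. \<bar>grad f y $ i\<bar>)" by (rule norm_le_l1_cart)
      also have "\<dots> \<le> real (card (UNIV :: 'n set)) * (\<eta> / CARD('n))"
        by (rule sum_bounded_above) (use \<rho>(2)[OF y] grad0 in \<open>auto simp: grad_def less_imp_le\<close>)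
      also have "\<dots> = \<eta>" by simp
      finally have g: "norm (grad f y) \<le> \<eta>" .
      have "sqrt (1 + (norm (grad f y))\<^sup>2) \<le> sqrt ((1 + norm (grad f y))\<^sup>2)"
        by (rule real_sqrt_le_mono) (simp add: power2_eq_square algebra_simps)
      also have "\<dots> = 1 + norm (grad f y)" by simp
      finally show ?thesis using g by simp
    qed
    obtain t0 where t0: "t0 > 0" "\<And>t. 0 < t \<and> t < t0 \<Longrightarrow>
     (\<forall>x. x \<bullet> (H *v x) < 2 * t / (1 + \<eta>) \<longrightarrow> x \<in> U \<and> f x < t \<and> f x \<le> (1 + \<eta>) * (x \<bullet> (H *v x)) / 2) \<and>
     (\<forall>x\<in>U. f x < t \<longrightarrow> norm x < \<rho> \<and> (1 - \<eta>) * (x \<bullet> (H *v x)) / 2 \<le> f x \<and> x \<bullet> (H *v x) < 2 * t / (1 - \<eta>))"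
      using loc[OF eta \<rho>(1)] by blast
    have "eventually (\<lambda>t. A t / sqrt t ^ n \<le> S t / sqrt t ^ n \<and> S t / sqrt t ^ n \<le> (1 + \<eta>) * (A t / sqrt t ^ n)) (at_right 0)"
      unfolding eventually_at_right_field
    proof (intro exI[of _ t0] conjI allI impI t0(1))
      fix t :: real assume t: "t > 0" "t < t0"
      note L = t0(2)[OF conjI[OF t]]
      have lm: "{x \<in> U. f x < t} \<in> lmeasurable" using Sub_lm L by blast
      have hbS: "\<And>x. x \<in> {x \<in> U. f x < t} \<Longrightarrow> 1 \<le> sqrt (1 + (norm (grad f x))\<^sup>2) \<and> sqrt (1 + (norm (grad f x))\<^sup>2) \<le> 1 + \<eta>"
        using L hb by blast
      have hi: "(\<lambda>x. sqrt (1 + (norm (grad f x))\<^sup>2)) integrable_on {x \<in> U. f x < t}"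
        by (rule int_bdd_cont[OF continuous_on_subset[OF hc] lm, where C="1 + \<eta>"]) (use hbS in \<open>auto simp: abs_le_iff\<close>)
      have c1: "(\<lambda>x. 1::real) integrable_on {x \<in> U. f x < t}" by (rule integrable_on_const[OF lm])
      have c2: "(\<lambda>x. (1 + \<eta>) * 1::real) integrable_on {x \<in> U. f x < t}" by (rule integrable_on_const[OF lm])
      have "A t \<le> S t" unfolding A_def S_def by (rule integral_le[OF c1 hi]) (use hbS in auto)
      moreover have "S t \<le> (1 + \<eta>) * A t"
      proof -
        have "S t \<le> integral {x \<in> U. f x < t} (\<lambda>x. (1 + \<eta>) * 1)"
          unfolding S_def by (rule integral_le[OF hi c2]) (use hbS in auto)
        also have "\<dots> = (1 + \<eta>) * A t" unfolding A_def by (rule integral_mult_right)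
        finally show ?thesis .
      qed
      moreover have "sqrt t ^ n > 0" using t by simp
      ultimately show "A t / sqrt t ^ n \<le> S t / sqrt t ^ n" "S t / sqrt t ^ n \<le> (1 + \<eta>) * (A t / sqrt t ^ n)"
        by (auto simp: divide_right_mono)
    qed
    then show ?thesis using A_ev[OF eta]
    proof (rule eventually_elim2)
      fix t assume a: "A t / sqrt t ^ n \<le> S t / sqrt t ^ n \<and> S t / sqrt t ^ n \<le> (1 + \<eta>) * (A t / sqrt t ^ n)"
        and b: "sqrt (2 / (1 + \<eta>)) ^ n * E.Cst \<le> A t / sqrt t ^ n \<and> A t / sqrt t ^ n \<le> sqrt (2 / (1 - \<eta>)) ^ n * E.Cst"
      have "(1 + \<eta>) * (A t / sqrt t ^ n) \<le> (1 + \<eta>) * (sqrt (2 / (1 - \<eta>)) ^ n * E.Cst)"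
        using b eta by (intro mult_left_mono) auto
      then show "sqrt (2 / (1 + \<eta>)) ^ n * E.Cst \<le> S t / sqrt t ^ n
       \<and> S t / sqrt t ^ n \<le> (1 + \<eta>) * (sqrt (2 / (1 - \<eta>)) ^ n * E.Cst)" using a b by linarith
    qed
  qed
  (* limits *)
  have l1: "((\<lambda>\<eta>. sqrt (2 / (1 + \<eta>)) ^ n * E.Cst) \<longlongrightarrow> sqrt 2 ^ n * E.Cst) (at_right 0)"
    by (auto intro!: tendsto_eq_intros)
  have l2: "((\<lambda>\<eta>. sqrt (2 / (1 - \<eta>)) ^ n * E.Cst) \<longlongrightarrow> sqrt 2 ^ n * E.Cst) (at_right 0)"
    by (auto intro!: tendsto_eq_intros)
  have l3: "((\<lambda>\<eta>. (1 + \<eta>) / 2 * sqrt (2 / (1 + \<eta>)) ^ (n + 2) * G) \<longlongrightarrow> 1 / 2 * sqrt 2 ^ (n + 2) * G) (at_right 0)"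
    by (auto intro!: tendsto_eq_intros)
  have l4: "((\<lambda>\<eta>. (1 - \<eta>) / 2 * sqrt (2 / (1 - \<eta>)) ^ (n + 2) * G) \<longlongrightarrow> 1 / 2 * sqrt 2 ^ (n + 2) * G) (at_right 0)"
    by (auto intro!: tendsto_eq_intros)
  have l5: "((\<lambda>\<eta>. (1 + \<eta>) * (sqrt (2 / (1 - \<eta>)) ^ n * E.Cst)) \<longlongrightarrow> sqrt 2 ^ n * E.Cst) (at_right 0)"
    by (auto intro!: tendsto_eq_intros)
  have c1: "sqrt 2 ^ n * E.Cst = sqrt 2 ^ n * \<omega> / sqrt K" by (simp add: Cst)
  have c2: "1 / 2 * sqrt 2 ^ (n + 2) * G = sqrt 2 ^ (n + 2) * \<omega> / (real (n + 2) * sqrt K)"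
  proof -
    have Kp: "sqrt K > 0" using K_pos by (simp add: K_def)
    show ?thesis unfolding G_def G1 Cst using const_eq[OF Kp, of "real n" "sqrt 2 ^ (n + 2)" \<omega>] by simp
  qed
  show ?thesis
  proof (intro conjI)
    show "((\<lambda>t. A t / sqrt t ^ n) \<longlongrightarrow> sqrt 2 ^ n * \<omega> / sqrt K) (at_right 0)"
      unfolding c1[symmetric] by (rule squeeze_param[OF A_ev l1 l2])
    show "((\<lambda>t. V t / sqrt t ^ (n + 2)) \<longlongrightarrow> sqrt 2 ^ (n + 2) * \<omega> / (real (n + 2) * sqrt K)) (at_right 0)"
      unfolding c2[symmetric] by (rule squeeze_param[OF V_ev l3 l4])
    show "((\<lambda>t. S t / sqrt t ^ n) \<longlongrightarrow> sqrt 2 ^ n * \<omega> / sqrt K) (at_right 0)"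
      unfolding c1[symmetric] by (rule squeeze_param[OF S_ev l1 l5])
  qed
qed


end
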